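(* Let $(\Omega,\mathcal F,\mu)$ be a finite measure space, $p\in[1,\infty)$ and $f\in L^p(\Omega,\mathcal F,\mu)$. Let $\mathfrak a_f\le\mathfrak b_f$ be the endpoints of the convex support of the distribution $\mu_f=\mu\circ f^{-1}$. Assume $\mu_f$ has a density $\Psi$ with respect to Lebesgue measure with $\Psi>0$ on $(\mathfrak a_f,\mathfrak b_f)$ and $\Psi=0$ outside. For $s\in(0,\mathfrak b_f-\mathfrak a_f)$ let $G_s:(\mathfrak a_f,\mathfrak b_f)\to[0,\infty)$, $G_s(y)=\Psi(y+s)/\Psi(y)$, and assume every $G_s$ is nonincreasing. Assume moreover one of: (H1) $\mathfrak a_f$ or $\mathfrak b_f$ is finite; (H2) for every $s\in(0,\mathfrak b_f-\mathfrak a_f)$, $G_s((\mathfrak a_f,\mathfrak b_f))$ is an infinite set; (H3) $\Psi$ is continuous. Then for every $k\ge1$ there is a unique minimizer of $\|f-g\|_p$ over $g\in\mathscr G_{p,k}$ (unique as an element of $L^p$).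
   Context: $\mathscr G_{p,k}$ is the set of functions $\sum_{i=1}^l a_i\mathbf 1_{A_i}\in L^p$ with $l\le k$, $\{A_i\}$ a measurable partition of $\Omega$, $a_i\in\mathbb R$. The cumulative distribution function is $F_f(x)=\mu(f^{-1}((-\infty,x]))$, and $\mathfrak a_f=\sup\{z:F_f(z)=0\}$, $\mathfrak b_f=\inf\{z:F_f(z)=\mu(\Omega)\}$ (possibly infinite). *)

theory Defs
  imports "HOL-Analysis.Analysis"
begin

definition Gpk :: "'a measure \<Rightarrow> nat \<Rightarrow> ('a \<Rightarrow> real) set" where
  "Gpk M k = {g. \<exists>l A a. l \<le> k \<and> (\<forall>i<l. A i \<in> sets M) \<and>
      disjoint_family_on A {..<l} \<and> (\<Union>i<l. A i) = space M \<and>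
      (\<forall>x\<in>space M. g x = (\<Sum>i<l. (a i :: real) * indicator (A i) x))}"

definition in_Lp :: "'a measure \<Rightarrow> real \<Rightarrow> ('a \<Rightarrow> real) \<Rightarrow> bool" where
  "in_Lp M p f \<longleftrightarrow> f \<in> borel_measurable M \<and> integrable M (\<lambda>x. \<bar>f x\<bar> powr p)"

definition Lp_norm :: "'a measure \<Rightarrow> real \<Rightarrow> ('a \<Rightarrow> real) \<Rightarrow> real" where
  "Lp_norm M p f = (\<integral>x. \<bar>f x\<bar> powr p \<partial>M) powr (1 / p)"

definition cdf_of :: "'a measure \<Rightarrow> ('a \<Rightarrow> real) \<Rightarrow> real \<Rightarrow> real" where
  "cdf_of M f x = measure M {\<omega> \<in> space M. f \<omega> \<le> x}"

definition lo_end :: "'a measure \<Rightarrow> ('a \<Rightarrow> real) \<Rightarrow> ereal" where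
  "lo_end M f = Sup (ereal ` {z. cdf_of M f z = 0})"

definition hi_end :: "'a measure \<Rightarrow> ('a \<Rightarrow> real) \<Rightarrow> ereal" where
  "hi_end M f = Inf (ereal ` {z. cdf_of M f z = measure M (space M)})"

definition Gs :: "(real \<Rightarrow> real) \<Rightarrow> real \<Rightarrow> real \<Rightarrow> real" where
  "Gs \<Psi> s y = \<Psi> (y + s) / \<Psi> y"

end

theory Submission
  imports Defs "HOL-Analysis.Analysis"
begin


lemma powr_sum_le:
  fixes u v p :: real assumes "u \<ge> 0" "v \<ge> 0" "p \<ge> 0"
  shows "(u + v) powr p \<le> 2 powr p * (u powr p + v powr p)"
proof -
  have "(u+v) powr p \<le> (2 * max u v) powr p" by (rule powr_mono2) (use assms in auto)
  also have "\<dots> = 2 powr p * max u v powr p" using assms by (simp add: powr_mult)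
  also have "max u v powr p \<le> u powr p + v powr p" by (cases "u \<le> v") (auto simp: max_def)
  hence "2 powr p * max u v powr p \<le> 2 powr p * (u powr p + v powr p)" by (intro mult_left_mono) auto
  finally show ?thesis .
qed

lemma powr_le_1_plus:
  fixes z q :: real assumes "z \<ge> 0" "0 \<le> q" "q \<le> p"
  shows "z powr q \<le> 1 + z powr p"
proof (cases "z \<le> 1")
  case True
  hence "z powr q \<le> 1" using assms by (simp add: powr_le1)
  then show ?thesis by (smt (verit) powr_ge_zero)
next
  case False
  hence "z powr q \<le> z powr p" using assms by (intro powr_mono) auto
  then show ?thesis by simp
qed

locale pcore =
  fixes p :: real
  assumes p1: "1 \<le> p"
begin

definition psi :: "real \<Rightarrow> real" where
  "psi z = sgn z * \<bar>z\<bar> powr (p - 1)"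

definition MC :: "(real \<Rightarrow> real) \<Rightarrow> bool" where
  "MC D \<longleftrightarrow> D \<in> borel_measurable borel \<and> (\<forall>y. 0 \<le> D y) \<and> integrable lborel D
      \<and> integrable lborel (\<lambda>y. \<bar>y\<bar> powr p * D y)"

definition Phi :: "(real \<Rightarrow> real) \<Rightarrow> real \<Rightarrow> real" where
  "Phi D c = (\<integral>y. \<bar>y - c\<bar> powr p * D y \<partial>lborel)"

definition Hf :: "(real \<Rightarrow> real) \<Rightarrow> real \<Rightarrow> real" where
  "Hf D c = (\<integral>y. psi (y - c) * D y \<partial>lborel)"

definition cmin :: "(real \<Rightarrow> real) \<Rightarrow> real \<Rightarrow> bool" where
  "cmin D m \<longleftrightarrow> (\<forall>c. Phi D m \<le> Phi D c)"

lemma psi_meas[measurable]: "psi \<in> borel_measurable borel"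
  unfolding psi_def by measurable

lemma psi_pos: "z > 0 \<Longrightarrow> psi z > 0" by (simp add: psi_def)
lemma psi_neg: "z < 0 \<Longrightarrow> psi z < 0" by (simp add: psi_def)
lemma psi_0[simp]: "psi 0 = 0" by (simp add: psi_def)
lemma psi_uminus: "psi (- z) = - psi z" by (simp add: psi_def sgn_minus)

lemma psi_mono: assumes "z1 \<le> z2" shows "psi z1 \<le> psi z2"
proof -
  have q: "p - 1 \<ge> 0" using p1 by simp
  consider "z1 \<le> 0" "z2 \<le> 0" | "z1 \<le> 0" "z2 > 0" | "z1 > 0" "z2 > 0" using assms by linarith
  then show ?thesis
  proof cases
    case 1
    have "\<bar>z2\<bar> powr (p-1) \<le> \<bar>z1\<bar> powr (p-1)" using 1 assms q by (intro powr_mono2) auto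
    then show ?thesis using 1 by (cases "z1 = 0"; cases "z2 = 0") (auto simp: psi_def)
  next
    case 2
    then show ?thesis using psi_pos[of z2] psi_neg[of z1] by (cases "z1 = 0") auto
  next
    case 3
    have "\<bar>z1\<bar> powr (p-1) \<le> \<bar>z2\<bar> powr (p-1)" using 3 assms q by (intro powr_mono2) auto
    then show ?thesis using 3 by (auto simp: psi_def)
  qed
qed

lemma psi_bound: "\<bar>psi z\<bar> \<le> 1 + \<bar>z\<bar> powr p"
proof -
  have "\<bar>psi z\<bar> \<le> \<bar>z\<bar> powr (p-1)" by (cases "z = 0") (auto simp: psi_def abs_mult)
  also have "\<dots> \<le> 1 + \<bar>z\<bar> powr p" using p1 by (intro powr_le_1_plus) auto
  finally show ?thesis .
qed

lemma tangent_pos: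
  fixes x w :: real assumes "x > 0" "w \<ge> 0"
  shows "x powr p + p * x powr (p - 1) * (w - x) \<le> w powr p"
proof (cases "w = 0")
  case True
  have "x * x powr (p-1) = x powr (1 + (p-1))" using assms by (intro powr_mult_base) auto
  hence "x powr (p-1) * x = x powr p" by (simp add: mult.commute)
  hence "x powr p + p * x powr (p - 1) * (w - x) = (1 - p) * x powr p" using True
    by (simp add: algebra_simps)
  also have "\<dots> \<le> 0" using p1 by (intro mult_nonpos_nonneg) auto
  finally show ?thesis using True by simp
next
  case False
  hence w: "w > 0" using assms by simp
  have "p * x powr (p - 1) * (w - x) \<le> w powr p - x powr p"
  proof (rule f''_imp_f'[of "{0<..}" "\<lambda>x. x powr p" "\<lambda>x. p * x powr (p - 1)"
        "\<lambda>x. p * ((p - 1) * x powr (p - 1 - 1))"])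
    show "convex {0::real<..}" by simp
    show "((\<lambda>x. x powr p) has_real_derivative p * x powr (p - 1)) (at x)" if "x \<in> {0<..}" for x
      using that by (auto intro!: derivative_eq_intros)
    show "((\<lambda>x. p * x powr (p - 1)) has_real_derivative p * ((p - 1) * x powr (p - 1 - 1))) (at x)"
      if "x \<in> {0<..}" for x
      using that by (auto intro!: derivative_eq_intros)
    show "0 \<le> p * ((p - 1) * x powr (p - 1 - 1))" if "x \<in> {0<..}" for x
      using that p1 by auto
  qed (use assms w in auto)
  then show ?thesis by simp
qed

lemma tangent: "\<bar>x\<bar> powr p + p * psi x * (y - x) \<le> \<bar>y\<bar> powr p"
proof -
  have pos: "\<bar>x\<bar> powr p + p * psi x * (y - x) \<le> \<bar>y\<bar> powr p" if x: "x > 0" for x y :: real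
  proof -
    have ps: "psi x = x powr (p - 1)" using x by (simp add: psi_def)
    have "p * psi x * (y - x) \<le> p * psi x * (\<bar>y\<bar> - x)"
      using x p1 ps by (intro mult_left_mono) auto
    hence "p * psi x * (y - x) \<le> p * x powr (p - 1) * (\<bar>y\<bar> - x)" using ps by simp
    moreover have "x powr p + p * x powr (p - 1) * (\<bar>y\<bar> - x) \<le> \<bar>y\<bar> powr p"
      using tangent_pos[OF x, of "\<bar>y\<bar>"] by simp
    ultimately show ?thesis using x by simp
  qed
  consider "x = 0" | "x > 0" | "x < 0" by linarith
  then show ?thesis
  proof cases
    case 1 then show ?thesis by simp
  next
    case 2 then show ?thesis using pos by blast
  next
    case 3
    have "\<bar>- x\<bar> powr p + p * psi (- x) * (- y - - x) \<le> \<bar>- y\<bar> powr p" using 3 by (intro pos) simp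
    then show ?thesis by (auto simp: psi_uminus algebra_simps)
  qed
qed

lemma MC_meas[measurable_dest]: "MC D \<Longrightarrow> D \<in> borel_measurable borel" by (simp add: MC_def)
lemma MC_nonneg: "MC D \<Longrightarrow> 0 \<le> D y" by (simp add: MC_def)

lemma pow_bound: "\<bar>y - c\<bar> powr p \<le> 2 powr p * (\<bar>y\<bar> powr p + \<bar>c\<bar> powr p)"
proof -
  have "\<bar>y - c\<bar> powr p \<le> (\<bar>y\<bar> + \<bar>c\<bar>) powr p" using p1 by (intro powr_mono2) auto
  also have "\<dots> \<le> 2 powr p * (\<bar>y\<bar> powr p + \<bar>c\<bar> powr p)" using p1 by (intro powr_sum_le) auto
  finally show ?thesis .
qed

lemma MC_int_pow: assumes "MC D" shows "integrable lborel (\<lambda>y. \<bar>y - c\<bar> powr p * D y)"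
proof (rule Bochner_Integration.integrable_bound)
  show "integrable lborel (\<lambda>y. 2 powr p * (\<bar>y\<bar> powr p * D y + \<bar>c\<bar> powr p * D y))"
    using assms unfolding MC_def by (intro integrable_mult_right integrable_add) auto
  show "(\<lambda>y. \<bar>y - c\<bar> powr p * D y) \<in> borel_measurable lborel" using assms by measurable
  show "AE y in lborel. norm (\<bar>y - c\<bar> powr p * D y) \<le> norm (2 powr p * (\<bar>y\<bar> powr p * D y + \<bar>c\<bar> powr p * D y))"
  proof (rule AE_I2)
    fix y
    have D: "D y \<ge> 0" using assms by (simp add: MC_nonneg)
    have "\<bar>y - c\<bar> powr p * D y \<le> 2 powr p * (\<bar>y\<bar> powr p + \<bar>c\<bar> powr p) * D y"
      using pow_bound D by (intro mult_right_mono) auto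
    then show "norm (\<bar>y - c\<bar> powr p * D y) \<le> norm (2 powr p * (\<bar>y\<bar> powr p * D y + \<bar>c\<bar> powr p * D y))"
      using D by (simp add: algebra_simps abs_mult)
  qed
qed

lemma MC_int_psi: assumes "MC D" shows "integrable lborel (\<lambda>y. psi (y - c) * D y)"
proof (rule Bochner_Integration.integrable_bound)
  show "integrable lborel (\<lambda>y. D y + \<bar>y - c\<bar> powr p * D y)"
    using assms MC_int_pow[OF assms, of c] unfolding MC_def by (intro Bochner_Integration.integrable_add) auto
  show "(\<lambda>y. psi (y - c) * D y) \<in> borel_measurable lborel" using assms by measurable
  show "AE y in lborel. norm (psi (y - c) * D y) \<le> norm (D y + \<bar>y - c\<bar> powr p * D y)"
  proof (rule AE_I2)
    fix y
    have D: "D y \<ge> 0" using assms by (simp add: MC_nonneg)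
    have "\<bar>psi (y - c)\<bar> * D y \<le> (1 + \<bar>y - c\<bar> powr p) * D y"
      using psi_bound D by (intro mult_right_mono) auto
    then show "norm (psi (y - c) * D y) \<le> norm (D y + \<bar>y - c\<bar> powr p * D y)"
      using D by (simp add: algebra_simps abs_mult)
  qed
qed

lemma Phi_tangent: assumes "MC D"
  shows "Phi D c - p * (c' - c) * Hf D c \<le> Phi D c'"
proof -
  have "Phi D c - p * (c' - c) * Hf D c = (\<integral>y. \<bar>y - c\<bar> powr p * D y - p * (c' - c) * (psi (y - c) * D y) \<partial>lborel)"
    unfolding Phi_def Hf_def using MC_int_pow[OF assms] MC_int_psi[OF assms]
    by (simp add: Bochner_Integration.integral_diff[OF MC_int_pow[OF assms, of c]
          integrable_mult_right[OF MC_int_psi[OF assms, of c]]] integral_mult_right_zero)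
  also have "\<dots> \<le> Phi D c'" unfolding Phi_def
  proof (rule integral_mono)
    show "integrable lborel (\<lambda>y. \<bar>y - c\<bar> powr p * D y - p * (c' - c) * (psi (y - c) * D y))"
      using MC_int_pow[OF assms] MC_int_psi[OF assms] by auto
    show "integrable lborel (\<lambda>y. \<bar>y - c'\<bar> powr p * D y)" using MC_int_pow[OF assms] .
    fix y
    have D: "D y \<ge> 0" using assms by (simp add: MC_nonneg)
    have "\<bar>y - c\<bar> powr p + p * psi (y - c) * ((y - c') - (y - c)) \<le> \<bar>y - c'\<bar> powr p"
      by (rule tangent)
    hence "(\<bar>y - c\<bar> powr p - p * (c' - c) * psi (y - c)) * D y \<le> \<bar>y - c'\<bar> powr p * D y"
      using D by (intro mult_right_mono) (auto simp: algebra_simps)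
    then show "\<bar>y - c\<bar> powr p * D y - p * (c' - c) * (psi (y - c) * D y) \<le> \<bar>y - c'\<bar> powr p * D y"
      by (simp add: algebra_simps)
  qed
  finally show ?thesis .
qed

lemma Hf_zero_cmin: assumes "MC D" "Hf D m = 0" shows "cmin D m"
  unfolding cmin_def
proof
  fix c show "Phi D m \<le> Phi D c" using Phi_tangent[OF assms(1), of m c] assms(2) by simp
qed

lemma cmin_sign: assumes "MC D" "cmin D m" shows "(m - c) * Hf D c \<ge> 0"
proof -
  have "Phi D c - p * (m - c) * Hf D c \<le> Phi D m" by (rule Phi_tangent[OF assms(1)])
  moreover have "Phi D m \<le> Phi D c" using assms(2) by (simp add: cmin_def)
  ultimately have "p * ((m - c) * Hf D c) \<ge> 0" by (simp add: algebra_simps)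
  then show ?thesis using p1 by (simp add: zero_le_mult_iff)
qed

end


lemma AE_Ioo_False:
  assumes "AE y in lborel. \<not> (\<alpha> < y \<and> y < (\<beta>::real))" "\<alpha> < \<beta>"
  shows False
proof -
  have "emeasure lborel {\<alpha><..<\<beta>} = 0"
    using assms(1) by (subst (asm) AE_iff_measurable[of "{\<alpha><..<\<beta>}"]) auto
  then show False using assms(2) by simp
qed

context pcore begin

lemma isCont_psi: "z \<noteq> 0 \<Longrightarrow> isCont psi z"
  unfolding psi_def by (intro continuous_intros) auto

lemma Hf_cont:
  assumes D: "MC D" and lim: "x \<longlonglongrightarrow> m" and bd: "\<And>n. \<bar>x n - m\<bar> \<le> 1"
  shows "(\<lambda>n. Hf D (x n)) \<longlonglongrightarrow> Hf D m"
  unfolding Hf_def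
proof (rule integral_dominated_convergence[where w="\<lambda>y. D y + 2 powr p * (\<bar>y\<bar> powr p * D y + (\<bar>m\<bar> + 1) powr p * D y)"])
  show "(\<lambda>y. psi (y - m) * D y) \<in> borel_measurable lborel" using D by measurable
  show "(\<lambda>y. psi (y - x n) * D y) \<in> borel_measurable lborel" for n using D by measurable
  show "integrable lborel (\<lambda>y. D y + 2 powr p * (\<bar>y\<bar> powr p * D y + (\<bar>m\<bar> + 1) powr p * D y))"
    using D unfolding MC_def by (intro Bochner_Integration.integrable_add integrable_mult_right) auto
  show "AE y in lborel. (\<lambda>n. psi (y - x n) * D y) \<longlonglongrightarrow> psi (y - m) * D y"
    using AE_lborel_singleton[of m]
  proof eventually_elim
    case (elim y)
    have "(\<lambda>n. y - x n) \<longlonglongrightarrow> y - m" by (intro tendsto_intros lim)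
    hence "(\<lambda>n. psi (y - x n)) \<longlonglongrightarrow> psi (y - m)"
      using isCont_psi[of "y - m"] elim by (intro isCont_tendsto_compose[where g=psi]) auto
    then show ?case by (intro tendsto_intros)
  qed
  show "AE y in lborel. norm (psi (y - x n) * D y) \<le> D y + 2 powr p * (\<bar>y\<bar> powr p * D y + (\<bar>m\<bar> + 1) powr p * D y)" for n
  proof (rule AE_I2)
    fix y
    have Dy: "D y \<ge> 0" using D by (simp add: MC_nonneg)
    have xn: "\<bar>x n\<bar> \<le> \<bar>m\<bar> + 1" using bd[of n] by linarith
    have "\<bar>psi (y - x n)\<bar> \<le> 1 + \<bar>y - x n\<bar> powr p" by (rule psi_bound)
    also have "\<bar>y - x n\<bar> powr p \<le> 2 powr p * (\<bar>y\<bar> powr p + \<bar>x n\<bar> powr p)" by (rule pow_bound)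
    also have "\<bar>x n\<bar> powr p \<le> (\<bar>m\<bar> + 1) powr p" using xn p1 by (intro powr_mono2) auto
    finally have "\<bar>psi (y - x n)\<bar> \<le> 1 + 2 powr p * (\<bar>y\<bar> powr p + (\<bar>m\<bar> + 1) powr p)" by simp
    hence "\<bar>psi (y - x n)\<bar> * D y \<le> (1 + 2 powr p * (\<bar>y\<bar> powr p + (\<bar>m\<bar> + 1) powr p)) * D y"
      using Dy by (intro mult_right_mono) auto
    then show "norm (psi (y - x n) * D y) \<le> D y + 2 powr p * (\<bar>y\<bar> powr p * D y + (\<bar>m\<bar> + 1) powr p * D y)"
      using Dy by (simp add: abs_mult algebra_simps)
  qed
qed

lemma cmin_Hf0: assumes D: "MC D" and m: "cmin D m" shows "Hf D m = 0"
proof -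
  define u where "u n = inverse (real (Suc n))" for n
  have u0: "u \<longlonglongrightarrow> 0" unfolding u_def by (rule LIMSEQ_inverse_real_of_nat)
  have upos: "u n > 0" "u n \<le> 1" for n unfolding u_def by (auto simp: field_simps)
  have uabs: "\<bar>u n\<bar> \<le> 1" for n using upos[of n] by simp
  have l1: "(\<lambda>n. Hf D (m + u n)) \<longlonglongrightarrow> Hf D m"
    using Hf_cont[OF D, of "\<lambda>n. m + u n" m] u0 uabs tendsto_add[OF tendsto_const u0, of m] by auto
  have l2: "(\<lambda>n. Hf D (m - u n)) \<longlonglongrightarrow> Hf D m"
    using Hf_cont[OF D, of "\<lambda>n. m - u n" m] u0 uabs tendsto_diff[OF tendsto_const u0, of m] by auto
  have "Hf D (m + u n) \<le> 0" for n
  proof -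
    have "(m - (m + u n)) * Hf D (m + u n) \<ge> 0" by (rule cmin_sign[OF D m])
    then show ?thesis using upos[of n] by (simp add: mult_le_0_iff zero_le_mult_iff)
  qed
  hence a: "Hf D m \<le> 0" using l1 by (intro tendsto_upperbound) auto
  have "Hf D (m - u n) \<ge> 0" for n
  proof -
    have "(m - (m - u n)) * Hf D (m - u n) \<ge> 0" by (rule cmin_sign[OF D m])
    then show ?thesis using upos[of n] by (simp add: zero_le_mult_iff)
  qed
  hence b: "Hf D m \<ge> 0" using l2 by (intro tendsto_lowerbound) auto
  from a b show ?thesis by simp
qed

lemma cmin_unique:
  assumes D: "MC D" and m1: "cmin D m1" and m2: "cmin D m2"
    and ab: "m1 \<le> \<alpha>" "\<alpha> < \<beta>" "\<beta> \<le> m2" and pos: "\<And>y. \<alpha> < y \<Longrightarrow> y < \<beta> \<Longrightarrow> D y > 0"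
  shows False
proof -
  have "Hf D m1 - Hf D m2 = 0" using cmin_Hf0[OF D m1] cmin_Hf0[OF D m2] by simp
  moreover have "(\<integral>y. (psi (y - m1) - psi (y - m2)) * D y \<partial>lborel) = Hf D m1 - Hf D m2"
    unfolding Hf_def left_diff_distrib
    by (rule Bochner_Integration.integral_diff[OF MC_int_psi[OF D] MC_int_psi[OF D]])
  ultimately have "(\<integral>y. (psi (y - m1) - psi (y - m2)) * D y \<partial>lborel) = 0" by simp
  moreover have "integrable lborel (\<lambda>y. (psi (y - m1) - psi (y - m2)) * D y)"
    using MC_int_psi[OF D] by (simp add: left_diff_distrib)
  moreover have nn: "(psi (y - m1) - psi (y - m2)) * D y \<ge> 0" for y
    using psi_mono[of "y - m2" "y - m1"] ab MC_nonneg[OF D, of y] by auto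
  ultimately have "AE y in lborel. (psi (y - m1) - psi (y - m2)) * D y = 0"
    by (subst (asm) integral_nonneg_eq_0_iff_AE) auto
  hence "AE y in lborel. \<not> (\<alpha> < y \<and> y < \<beta>)"
  proof eventually_elim
    case (elim y)
    show ?case
    proof
      assume y: "\<alpha> < y \<and> y < \<beta>"
      have "psi (y - m1) > 0" using y ab by (intro psi_pos) auto
      moreover have "psi (y - m2) < 0" using y ab by (intro psi_neg) auto
      moreover have "D y > 0" using y pos by auto
      ultimately have "(psi (y - m1) - psi (y - m2)) * D y > 0" by simp
      then show False using elim by simp
    qed
  qed
  then show False using ab AE_Ioo_False by blast
qed

lemma gcl:
  assumes D: "MC D" and L: "MC L" and k: "\<kappa> \<ge> 0"
    and up: "\<And>y. y > m \<Longrightarrow> L y \<le> \<kappa> * D y" and lo: "\<And>y. y < m \<Longrightarrow> \<kappa> * D y \<le> L y"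
  shows "Hf L m \<le> \<kappa> * Hf D m"
    and "Hf L m = \<kappa> * Hf D m \<Longrightarrow> AE y in lborel. L y = \<kappa> * D y"
proof -
  have "(\<integral>y. psi (y - m) * (\<kappa> * D y - L y) \<partial>lborel) =
     (\<integral>y. \<kappa> * (psi (y - m) * D y) - psi (y - m) * L y \<partial>lborel)"
    by (simp add: algebra_simps)
  also have "\<dots> = (\<integral>y. \<kappa> * (psi (y - m) * D y) \<partial>lborel) - (\<integral>y. psi (y - m) * L y \<partial>lborel)"
    by (rule Bochner_Integration.integral_diff[OF integrable_mult_right[OF MC_int_psi[OF D]] MC_int_psi[OF L]])
  also have "\<dots> = \<kappa> * Hf D m - Hf L m" unfolding Hf_def by (simp add: integral_mult_right_zero)
  finally have eq: "\<kappa> * Hf D m - Hf L m = (\<integral>y. psi (y - m) * (\<kappa> * D y - L y) \<partial>lborel)" by simp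
  have int: "integrable lborel (\<lambda>y. psi (y - m) * (\<kappa> * D y - L y))"
    using MC_int_psi[OF D, of m] MC_int_psi[OF L, of m] by (simp add: algebra_simps)
  have nn: "psi (y - m) * (\<kappa> * D y - L y) \<ge> 0" for y
  proof -
    consider "y > m" | "y = m" | "y < m" by linarith
    then show ?thesis
    proof cases
      case 1 then show ?thesis using psi_pos[of "y - m"] up[of y] by simp
    next
      case 2 then show ?thesis by simp
    next
      case 3 then show ?thesis using psi_neg[of "y - m"] lo[of y] by (simp add: mult_nonpos_nonpos)
    qed
  qed
  have "0 \<le> (\<integral>y. psi (y - m) * (\<kappa> * D y - L y) \<partial>lborel)" by (rule integral_nonneg_AE[OF AE_I2[OF nn]])
  then show "Hf L m \<le> \<kappa> * Hf D m" using eq by simp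
  assume "Hf L m = \<kappa> * Hf D m"
  hence "(\<integral>y. psi (y - m) * (\<kappa> * D y - L y) \<partial>lborel) = 0" using eq by simp
  hence "AE y in lborel. psi (y - m) * (\<kappa> * D y - L y) = 0"
    using int nn by (subst (asm) integral_nonneg_eq_0_iff_AE) auto
  then show "AE y in lborel. L y = \<kappa> * D y"
    using AE_lborel_singleton[of m]
  proof eventually_elim
    case (elim y)
    then have "psi (y - m) \<noteq> 0" using psi_pos[of "y - m"] psi_neg[of "y - m"] by (cases "y > m") auto
    then show ?case using elim by simp
  qed
qed

lemma gcl2:
  assumes D: "MC D" and L: "MC L" and k: "\<kappa> \<ge> 0" and m: "cmin D m" and m': "cmin L m'" and mm: "m \<le> m'"
    and up: "\<And>y. y > m \<Longrightarrow> L y \<le> \<kappa> * D y" and lo: "\<And>y. y < m \<Longrightarrow> \<kappa> * D y \<le> L y"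
  shows "AE y in lborel. L y = \<kappa> * D y"
proof (rule gcl(2)[where m=m, OF D L k up lo])
  have h0: "Hf D m = 0" by (rule cmin_Hf0[OF D m])
  have "Hf L m \<le> 0" using gcl(1)[where m=m, OF D L k up lo] h0 by simp
  moreover have "Hf L m \<ge> 0"
  proof (cases "m = m'")
    case True then show ?thesis using cmin_Hf0[OF L m'] by simp
  next
    case False
    hence "m < m'" using mm by simp
    moreover have "(m' - m) * Hf L m \<ge> 0" by (rule cmin_sign[OF L m'])
    ultimately show ?thesis by (simp add: zero_le_mult_iff)
  qed
  ultimately show "Hf L m = \<kappa> * Hf D m" using h0 by simp
qed

lemma MC_shift: assumes D: "MC D" shows "MC (\<lambda>y. D (y + e))"
proof -
  have "integrable lborel (\<lambda>x. D (e + 1 * x))"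
    using D unfolding MC_def by (intro lborel_integrable_real_affine) auto
  moreover have "integrable lborel (\<lambda>x. \<bar>(e + 1 * x) - e\<bar> powr p * D (e + 1 * x))"
    using MC_int_pow[OF D, of e] by (intro lborel_integrable_real_affine[where f="\<lambda>z. \<bar>z - e\<bar> powr p * D z"]) auto
  ultimately show ?thesis using D unfolding MC_def by (auto simp: add.commute)
qed

lemma Phi_shift: "Phi (\<lambda>y. D (y + e)) c = Phi D (c + e)"
  unfolding Phi_def
  using lborel_integral_real_affine[of 1 "\<lambda>z. \<bar>z - (c + e)\<bar> powr p * D z" e]
  by (simp add: add.commute add_diff_eq diff_diff_eq)

lemma cmin_shift: "cmin D m \<Longrightarrow> cmin (\<lambda>y. D (y + e)) (m - e)"
  unfolding cmin_def Phi_shift by (metis diff_add_cancel)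

end


lemma AE_Ioo_ex: assumes "AE y in lborel. P y" "\<alpha> < (\<beta>::real)" shows "\<exists>y. \<alpha> < y \<and> y < \<beta> \<and> P y"
proof (rule ccontr)
  assume "\<not> ?thesis"
  hence "AE y in lborel. \<not> (\<alpha> < y \<and> y < \<beta>)" using assms(1) by (auto elim: eventually_mono)
  then show False using assms(2) AE_Ioo_False by blast
qed

lemma AE_Ioo_contra:
  assumes "AE y in lborel. P y" "\<alpha> < (\<beta>::real)" "\<And>y. \<alpha> < y \<Longrightarrow> y < \<beta> \<Longrightarrow> \<not> P y" shows False
  using AE_Ioo_ex[OF assms(1,2)] assms(3) by blast

lemma ereal_shift_less: "a < ereal u \<Longrightarrow> ereal (u + e) < b \<Longrightarrow> ereal e < b - a"
  by (cases a; cases b) auto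

lemma ereal_less_shift: "ereal (y + e) < R + ereal e \<Longrightarrow> ereal y < R"
  by (cases R) auto

lemma ereal_le_shift: "L' \<le> L + ereal e \<Longrightarrow> L \<le> ereal y \<Longrightarrow> L' \<le> ereal (y + e)"
proof -
  assume "L' \<le> L + ereal e" "L \<le> ereal y"
  moreover have "L + ereal e \<le> ereal y + ereal e" using \<open>L \<le> ereal y\<close> by (intro add_right_mono)
  ultimately show ?thesis by simp
qed

lemma cell_meas[measurable]: "{y::real. L \<le> ereal y \<and> ereal y < R} \<in> sets borel"
  by measurable

locale qset = pcore +
  fixes \<Psi> :: "real \<Rightarrow> real" and a b :: ereal
  assumes Psi_meas[measurable]: "\<Psi> \<in> borel_measurable borel"
    and Psi_pos: "\<And>y. a < ereal y \<Longrightarrow> ereal y < b \<Longrightarrow> \<Psi> y > 0"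
    and Psi_zero: "\<And>y. \<not> (a < ereal y \<and> ereal y < b) \<Longrightarrow> \<Psi> y = 0"
    and Psi_int: "integrable lborel \<Psi>"
    and Psi_mom: "integrable lborel (\<lambda>y. \<bar>y\<bar> powr p * \<Psi> y)"
    and G_mono: "\<And>s y z. 0 < s \<Longrightarrow> ereal s < b - a \<Longrightarrow> a < ereal y \<Longrightarrow> y \<le> z \<Longrightarrow>
                   ereal z < b \<Longrightarrow> Gs \<Psi> s z \<le> Gs \<Psi> s y"
    and ab: "a < b"
begin

lemma Psi_pos_iff: "\<Psi> y > 0 \<longleftrightarrow> a < ereal y \<and> ereal y < b"
  using Psi_pos Psi_zero by force

lemma Psi_nonneg: "\<Psi> y \<ge> 0"
  using Psi_pos_iff[of y] Psi_zero[of y] by force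

lemma MC_Psi: "MC \<Psi>"
  unfolding MC_def using Psi_int Psi_mom Psi_nonneg by auto

definition DC :: "real set \<Rightarrow> real \<Rightarrow> real" where
  "DC S y = \<Psi> y * indicator S y"

lemma DC_nonneg: "DC S y \<ge> 0" by (simp add: DC_def Psi_nonneg)

lemma MC_DC: assumes S[measurable]: "S \<in> sets borel" shows "MC (DC S)"
proof -
  have "integrable lborel (DC S)"
  proof (rule Bochner_Integration.integrable_bound[OF Psi_int])
    show "DC S \<in> borel_measurable lborel" unfolding DC_def by measurable
    show "AE x in lborel. norm (DC S x) \<le> norm (\<Psi> x)"
      by (rule AE_I2) (auto simp: DC_def Psi_nonneg indicator_def)
  qed
  moreover have "integrable lborel (\<lambda>y. \<bar>y\<bar> powr p * DC S y)"
  proof (rule Bochner_Integration.integrable_bound[OF Psi_mom])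
    show "(\<lambda>y. \<bar>y\<bar> powr p * DC S y) \<in> borel_measurable lborel" unfolding DC_def by measurable
    show "AE x in lborel. norm (\<bar>x\<bar> powr p * DC S x) \<le> norm (\<bar>x\<bar> powr p * \<Psi> x)"
      by (rule AE_I2) (auto simp: DC_def Psi_nonneg indicator_def abs_mult)
  qed
  ultimately show ?thesis unfolding MC_def using DC_nonneg by (auto simp: DC_def)
qed

lemma ccl:
  fixes L R L' R' :: ereal and m e :: real
  defines "D \<equiv> DC {y. L \<le> ereal y \<and> ereal y < R}" and "D' \<equiv> DC {y. L' \<le> ereal y \<and> ereal y < R'}"
  assumes m: "a < ereal m" "ereal (m + e) < b" and e: "0 \<le> e"
    and cell: "L < ereal m" "ereal m < R" "ereal (m + e) < R'"
    and LL: "L' \<le> L + ereal e" and RR: "R' \<le> R + ereal e"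
    and c1: "cmin D m" and c2: "cmin D' (m + e)"
  shows "AE y in lborel. D' (y + e) = (\<Psi> (m + e) / \<Psi> m) * D y"
proof -
  have mme: "ereal m \<le> ereal (m + e)" using e by simp
  have mb: "ereal m < b" using le_less_trans[OF mme m(2)] .
  have ma: "a < ereal (m + e)" using less_le_trans[OF m(1) mme] .
  have Pm: "\<Psi> m > 0" using Psi_pos m mb by auto
  have Pme: "\<Psi> (m + e) > 0" using Psi_pos ma m by auto
  define \<kappa> where "\<kappa> = \<Psi> (m + e) / \<Psi> m"
  have k0: "\<kappa> \<ge> 0" unfolding \<kappa>_def using Pm Pme by simp
  have MD: "MC D" unfolding D_def by (rule MC_DC) measurable
  have MD': "MC (\<lambda>y. D' (y + e))" unfolding D'_def by (rule MC_shift, rule MC_DC) measurable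
  have c2': "cmin (\<lambda>y. D' (y + e)) m" using cmin_shift[OF c2, of e] by simp
  have es: "e = 0 \<or> (0 < e \<and> ereal e < b - a)" using e ereal_shift_less[OF m] by auto
  show ?thesis unfolding \<kappa>_def[symmetric]
  proof (rule gcl2[OF MD MD' k0 c1 c2' order_refl])
    fix y assume y: "y > m"
    show "D' (y + e) \<le> \<kappa> * D y"
    proof (cases "L' \<le> ereal (y + e) \<and> ereal (y + e) < R' \<and> \<Psi> (y + e) > 0")
      case False
      hence "D' (y + e) = 0" unfolding D'_def DC_def using Psi_nonneg[of "y+e"] by (auto simp: indicator_def)
      then show ?thesis using k0 by (simp add: D_def DC_nonneg)
    next
      case True
      have "ereal (y + e) < R + ereal e" using True RR by (meson less_le_trans)
      hence yR: "ereal y < R" by (rule ereal_less_shift)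
      have "ereal m < ereal y" using y by simp
      hence yL: "L \<le> ereal y" using cell(1) by (meson less_trans less_imp_le)
      have yb: "ereal (y + e) < b" using True Psi_pos_iff by auto
      have "ereal y \<le> ereal (y + e)" using e by simp
      hence yb': "ereal y < b" using yb by (rule le_less_trans)
      have "ereal m < ereal y" using y by simp
      hence ya: "a < ereal y" using m(1) by (rule less_trans[rotated])
      have Py: "\<Psi> y > 0" using Psi_pos ya yb' by auto
      have DD: "D y = \<Psi> y" "D' (y + e) = \<Psi> (y + e)" using True yR yL by (auto simp: D_def D'_def DC_def)
      have "\<Psi> (y + e) \<le> \<kappa> * \<Psi> y"
        using es
      proof
        assume "e = 0" then show ?thesis using Pm by (simp add: \<kappa>_def)
      next
        assume es: "0 < e \<and> ereal e < b - a"
        have "Gs \<Psi> e y \<le> Gs \<Psi> e m" using G_mono[of e m y] es m y yb' by auto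
        then show ?thesis using Py by (simp add: Gs_def \<kappa>_def divide_le_eq)
      qed
      then show ?thesis using DD by simp
    qed
  next
    fix y assume y: "y < m"
    show "\<kappa> * D y \<le> D' (y + e)"
    proof (cases "L \<le> ereal y \<and> ereal y < R \<and> \<Psi> y > 0")
      case False
      hence "D y = 0" unfolding D_def DC_def using Psi_nonneg[of y] by (auto simp: indicator_def)
      then show ?thesis by (simp add: D'_def DC_nonneg)
    next
      case True
      have ya: "a < ereal y" "ereal y < b" using True Psi_pos_iff by auto
      have L'y: "L' \<le> ereal (y + e)" using ereal_le_shift[OF LL] True by auto
      have "ereal (y + e) < ereal (m + e)" using y by simp
      hence yR': "ereal (y + e) < R'" using cell(3) by (rule less_trans)
      have DD: "D y = \<Psi> y" "D' (y + e) = \<Psi> (y + e)" using True L'y yR' by (auto simp: D_def D'_def DC_def)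
      have "\<kappa> * \<Psi> y \<le> \<Psi> (y + e)"
        using es
      proof
        assume "e = 0" then show ?thesis using Pm by (simp add: \<kappa>_def)
      next
        assume es: "0 < e \<and> ereal e < b - a"
        have "Gs \<Psi> e m \<le> Gs \<Psi> e y" using G_mono[of e y m] es ya y mb by auto
        then show ?thesis using True by (simp add: Gs_def \<kappa>_def le_divide_eq)
      qed
      then show ?thesis using DD by simp
    qed
  qed
qed

end


definition smono :: "(nat \<Rightarrow> real) \<Rightarrow> nat \<Rightarrow> bool" where
  "smono s k \<longleftrightarrow> (\<forall>i j. i < j \<longrightarrow> j < k \<longrightarrow> s i < s j)"

definition T :: "(nat \<Rightarrow> real) \<Rightarrow> nat \<Rightarrow> nat \<Rightarrow> ereal" where
  "T s k i = (if i = 0 then -\<infinity> else if k \<le> i then \<infinity> else ereal ((s (i - 1) + s i) / 2))"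

definition cell :: "(nat \<Rightarrow> real) \<Rightarrow> nat \<Rightarrow> nat \<Rightarrow> real set" where
  "cell s k i = {y. T s k i \<le> ereal y \<and> ereal y < T s k (Suc i)}"

lemma cell_sets[measurable]: "cell s k i \<in> sets borel"
  unfolding cell_def by measurable

lemma T_mono: assumes "smono s k" "i < j" "j \<le> k" shows "T s k i < T s k j"
proof -
  consider "i = 0" | "j = k" | "0 < i" "j < k" using assms by linarith
  then show ?thesis
  proof cases
    case 1 then show ?thesis using assms by (auto simp: T_def)
  next
    case 2 then show ?thesis using assms by (auto simp: T_def)
  next
    case 3
    have "s (i - 1) < s (j - 1)" "s i < s j" using assms 3 unfolding smono_def by auto
    then show ?thesis using 3 assms by (auto simp: T_def)
  qed
qed

lemma T_mono_le: assumes "smono s k" "i \<le> j" "j \<le> k" shows "T s k i \<le> T s k j"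
  using T_mono[OF assms(1) _ assms(3), of i] assms(2) by (cases "i = j") auto

lemma s_in_cell: assumes "smono s k" "i < k"
  shows "T s k i < ereal (s i)" "ereal (s i) < T s k (Suc i)"
proof -
  show "T s k i < ereal (s i)"
  proof (cases "i = 0")
    case False
    have "s (i - 1) < s i" using assms False unfolding smono_def by auto
    then show ?thesis using False assms by (auto simp: T_def)
  qed (simp add: T_def)
  show "ereal (s i) < T s k (Suc i)"
  proof (cases "Suc i < k")
    case True
    have "s i < s (Suc i)" using assms True unfolding smono_def by auto
    then show ?thesis using True by (auto simp: T_def)
  qed (simp add: T_def)
qed

lemma cell_ex: assumes "smono s k" "0 < k" shows "\<exists>i<k. y \<in> cell s k i"
proof -
  define I where "I = {i. i < k \<and> T s k i \<le> ereal y}"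
  have fin: "finite I" "0 \<in> I" using assms by (auto simp: I_def T_def)
  define i where "i = Max I"
  have iI: "i \<in> I" using fin unfolding i_def by (intro Max_in) auto
  have "ereal y < T s k (Suc i)"
  proof (cases "Suc i < k")
    case True
    have "Suc i \<notin> I"
    proof
      assume "Suc i \<in> I"
      hence "Suc i \<le> i" using Max_ge[OF fin(1)] unfolding i_def by blast
      then show False by simp
    qed
    then show ?thesis using True by (auto simp: I_def)
  next
    case False
    hence "Suc i = k" using iI by (auto simp: I_def)
    then show ?thesis by (simp add: T_def)
  qed
  then show ?thesis using iI unfolding I_def cell_def by auto
qed

lemma cell_unique: assumes "smono s k" "y \<in> cell s k i" "y \<in> cell s k j" "i < k" "j < k" shows "i = j"
proof (rule ccontr)
  assume "i \<noteq> j"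
  then consider "i < j" | "j < i" by linarith
  then show False
  proof cases
    case 1
    have "T s k (Suc i) \<le> T s k j" using 1 assms by (intro T_mono_le) auto
    then show False using assms(2,3) unfolding cell_def by auto
  next
    case 2
    have "T s k (Suc j) \<le> T s k i" using 2 assms by (intro T_mono_le) auto
    then show False using assms(2,3) unfolding cell_def by auto
  qed
qed

lemma cell_nearest: assumes "smono s k" "y \<in> cell s k i" "i < k" "j < k"
  shows "\<bar>y - s i\<bar> \<le> \<bar>y - s j\<bar>"
proof -
  consider "j = i" | "i < j" | "j < i" by linarith
  then show ?thesis
  proof cases
    case 2
    have "ereal y < T s k (Suc i)" using assms unfolding cell_def by auto
    moreover have "Suc i < k" using 2 assms by auto
    ultimately have "y < (s i + s (Suc i)) / 2" by (simp add: T_def)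
    moreover have "s (Suc i) \<le> s j"
    proof (cases "Suc i = j")
      case False
      hence "Suc i < j" using 2 by simp
      then show ?thesis using assms(1,4) unfolding smono_def by (meson less_imp_le)
    qed simp
    moreover have "s i < s j" using assms 2 unfolding smono_def by auto
    ultimately show ?thesis by (cases "y \<le> s i"; cases "y \<le> s j") (auto simp: abs_real_def field_simps)
  next
    case 3
    have "T s k i \<le> ereal y" using assms unfolding cell_def by auto
    moreover have "0 < i" using 3 by auto
    ultimately have "(s (i - 1) + s i) / 2 \<le> y" using assms by (simp add: T_def)
    moreover have "s j \<le> s (i - 1)"
    proof (cases "j = i - 1")
      case False
      hence "j < i - 1" using 3 by simp
      moreover have "i - 1 < k" using assms(3) by simp
      ultimately show ?thesis using assms(1) unfolding smono_def by (meson less_imp_le)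
    qed simp
    moreover have "s j < s i" using assms 3 unfolding smono_def by auto
    ultimately show ?thesis by (cases "y \<le> s i"; cases "y \<le> s j") (auto simp: abs_real_def field_simps)
  qed simp
qed

lemma infdist_cell: assumes "smono s k" "y \<in> cell s k i" "i < k"
  shows "infdist y (s ` {..<k}) = \<bar>y - s i\<bar>"
proof -
  have ne: "s ` {..<k} \<noteq> {}" using assms by auto
  have cl: "closed (s ` {..<k})" by (intro finite_imp_closed) auto
  obtain x where x: "x \<in> s ` {..<k}" "infdist y (s ` {..<k}) = dist y x"
    using infdist_attains_inf[OF cl ne, of y] by blast
  obtain j where j: "j < k" "x = s j" using x by auto
  have "infdist y (s ` {..<k}) \<le> \<bar>y - s i\<bar>" using infdist_le[of "s i" "s ` {..<k}" y] assms
    by (auto simp: dist_real_def)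
  moreover have "\<bar>y - s i\<bar> \<le> infdist y (s ` {..<k})" using x j cell_nearest[OF assms(1,2,3) j(1)]
    by (simp add: dist_real_def)
  ultimately show ?thesis by simp
qed

lemma sum_cell: assumes "smono s k" "y \<in> cell s k i0" "i0 < k"
  shows "(\<Sum>i<k. F i * indicator (cell s k i) y) = (F i0 :: real)"
proof -
  have "(\<Sum>i<k. F i * indicator (cell s k i) y) = (\<Sum>i<k. if i = i0 then F i else 0)"
    using cell_unique[OF assms(1)] assms by (intro sum.cong) (auto simp: indicator_def)
  also have "\<dots> = F i0" using assms(3) by (simp add: sum.delta)
  finally show ?thesis .
qed

definition enum :: "real set \<Rightarrow> nat \<Rightarrow> real" where
  "enum V i = sorted_list_of_set V ! i"

lemma enum_props: assumes "finite V"
  shows "smono (enum V) (card V)" "enum V ` {..<card V} = V"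
proof -
  have l: "length (sorted_list_of_set V) = card V" using assms by simp
  have sw: "sorted_wrt (<) (sorted_list_of_set V)" using assms by (simp add: strict_sorted_list_of_set)
  show "smono (enum V) (card V)" unfolding smono_def enum_def
    using sorted_wrt_nth_less[OF sw] l by auto
  have "x \<in> enum V ` {..<card V} \<longleftrightarrow> x \<in> set (sorted_list_of_set V)" for x
    unfolding enum_def in_set_conv_nth l by auto
  then show "enum V ` {..<card V} = V" using assms by auto
qed

context qset begin

definition CS :: "real set \<Rightarrow> real" where
  "CS V = (\<integral>y. infdist y V powr p * \<Psi> y \<partial>lborel)"

definition quant :: "nat \<Rightarrow> real set \<Rightarrow> bool" where
  "quant k V \<longleftrightarrow> finite V \<and> V \<noteq> {} \<and> card V \<le> k"

definition opt :: "nat \<Rightarrow> real set \<Rightarrow> bool" where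
  "opt k V \<longleftrightarrow> quant k V \<and> (\<forall>W. quant k W \<longrightarrow> CS V \<le> CS W)"

lemma infdist_meas[measurable]: "(\<lambda>y::real. infdist y V) \<in> borel_measurable borel"
  by (intro borel_measurable_continuous_onI continuous_at_imp_continuous_on ballI continuous_infdist continuous_ident)

lemma CS_integrable: assumes "v \<in> V" shows "integrable lborel (\<lambda>y. infdist y V powr p * \<Psi> y)"
proof (rule Bochner_Integration.integrable_bound[OF MC_int_pow[OF MC_Psi, of v]])
  show "(\<lambda>y. infdist y V powr p * \<Psi> y) \<in> borel_measurable lborel" by measurable
  show "AE y in lborel. norm (infdist y V powr p * \<Psi> y) \<le> norm (\<bar>y - v\<bar> powr p * \<Psi> y)"
  proof (rule AE_I2)
    fix y
    have "infdist y V \<le> \<bar>y - v\<bar>" using infdist_le[OF assms, of y] by (simp add: dist_real_def)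
    hence "infdist y V powr p \<le> \<bar>y - v\<bar> powr p" using p1 by (intro powr_mono2) (auto simp: infdist_nonneg)
    hence "infdist y V powr p * \<Psi> y \<le> \<bar>y - v\<bar> powr p * \<Psi> y" using Psi_nonneg by (intro mult_right_mono) auto
    then show "norm (infdist y V powr p * \<Psi> y) \<le> norm (\<bar>y - v\<bar> powr p * \<Psi> y)"
      using Psi_nonneg[of y] by simp
  qed
qed

lemma Phi_DC_sum_int:
  "integrable lborel (\<lambda>y. \<Sum>i<k. \<bar>y - w i\<bar> powr p * DC (cell s k i) y)"
  by (intro Bochner_Integration.integrable_sum MC_int_pow MC_DC cell_sets)

lemma CS_le_sum: assumes "smono s k" "0 < k"
  shows "CS (w ` {..<k}) \<le> (\<Sum>i<k. Phi (DC (cell s k i)) (w i))"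
proof -
  have "CS (w ` {..<k}) \<le> (\<integral>y. (\<Sum>i<k. \<bar>y - w i\<bar> powr p * DC (cell s k i) y) \<partial>lborel)"
    unfolding CS_def
  proof (rule integral_mono)
    show "integrable lborel (\<lambda>y. infdist y (w ` {..<k}) powr p * \<Psi> y)"
      using assms by (intro CS_integrable[of "w 0"]) auto
    show "integrable lborel (\<lambda>y. \<Sum>i<k. \<bar>y - w i\<bar> powr p * DC (cell s k i) y)" by (rule Phi_DC_sum_int)
    fix y
    obtain i0 where i0: "i0 < k" "y \<in> cell s k i0" using cell_ex[OF assms] by blast
    have "infdist y (w ` {..<k}) \<le> \<bar>y - w i0\<bar>" using infdist_le[of "w i0" "w ` {..<k}" y] i0
      by (simp add: dist_real_def)
    hence "infdist y (w ` {..<k}) powr p \<le> \<bar>y - w i0\<bar> powr p" using p1 by (intro powr_mono2) (auto simp: infdist_nonneg)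
    hence "infdist y (w ` {..<k}) powr p * \<Psi> y \<le> \<bar>y - w i0\<bar> powr p * \<Psi> y" using Psi_nonneg by (intro mult_right_mono) auto
    also have "\<dots> = (\<Sum>i<k. (\<bar>y - w i\<bar> powr p * \<Psi> y) * indicator (cell s k i) y)"
      by (rule sum_cell[OF assms(1) i0(2,1), symmetric])
    finally show "infdist y (w ` {..<k}) powr p * \<Psi> y \<le> (\<Sum>i<k. \<bar>y - w i\<bar> powr p * DC (cell s k i) y)"
      by (simp add: DC_def mult.assoc)
  qed
  also have "\<dots> = (\<Sum>i<k. Phi (DC (cell s k i)) (w i))" unfolding Phi_def
    by (intro Bochner_Integration.integral_sum MC_int_pow MC_DC cell_sets)
  finally show ?thesis .
qed

lemma CS_eq_sum: assumes "smono s k" "0 < k"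
  shows "CS (s ` {..<k}) = (\<Sum>i<k. Phi (DC (cell s k i)) (s i))"
proof -
  have "CS (s ` {..<k}) = (\<integral>y. (\<Sum>i<k. \<bar>y - s i\<bar> powr p * DC (cell s k i) y) \<partial>lborel)"
    unfolding CS_def
  proof (rule Bochner_Integration.integral_cong[OF refl])
    fix y
    obtain i0 where i0: "i0 < k" "y \<in> cell s k i0" using cell_ex[OF assms] by blast
    have "infdist y (s ` {..<k}) powr p * \<Psi> y = \<bar>y - s i0\<bar> powr p * \<Psi> y"
      using infdist_cell[OF assms(1) i0(2,1)] by simp
    also have "\<dots> = (\<Sum>i<k. (\<bar>y - s i\<bar> powr p * \<Psi> y) * indicator (cell s k i) y)"
      by (rule sum_cell[OF assms(1) i0(2,1), symmetric])
    finally show "infdist y (s ` {..<k}) powr p * \<Psi> y = (\<Sum>i<k. \<bar>y - s i\<bar> powr p * DC (cell s k i) y)"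
      by (simp add: DC_def mult.assoc)
  qed
  also have "\<dots> = (\<Sum>i<k. Phi (DC (cell s k i)) (s i))" unfolding Phi_def
    by (intro Bochner_Integration.integral_sum MC_int_pow MC_DC cell_sets)
  finally show ?thesis .
qed

lemma opt_cmin: assumes o: "opt k V" and j: "j < card V"
  shows "cmin (DC (cell (enum V) (card V) j)) (enum V j)"
  unfolding cmin_def
proof
  fix c
  define n where "n = card V"
  define s where "s = enum V"
  have fin: "finite V" and ne: "V \<noteq> {}" and kn: "n \<le> k" using o unfolding opt_def quant_def n_def by auto
  have n0: "0 < n" using fin ne unfolding n_def by (simp add: card_gt_0_iff)
  have sm: "smono s n" and sV: "s ` {..<n} = V" using enum_props[OF fin] unfolding s_def n_def by auto
  define w where "w = s(j := c)"
  have qW: "quant k (w ` {..<n})" unfolding quant_def using n0 kn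
    by (auto intro: order_trans[OF card_image_le])
  have "CS V \<le> CS (w ` {..<n})" using o qW unfolding opt_def by auto
  also have "\<dots> \<le> (\<Sum>i<n. Phi (DC (cell s n i)) (w i))" by (rule CS_le_sum[OF sm n0])
  finally have 1: "(\<Sum>i<n. Phi (DC (cell s n i)) (s i)) \<le> (\<Sum>i<n. Phi (DC (cell s n i)) (w i))"
    using CS_eq_sum[OF sm n0] sV by simp
  have jn: "j \<in> {..<n}" using j unfolding n_def by simp
  have 2: "(\<Sum>i<n. Phi (DC (cell s n i)) (w i)) = Phi (DC (cell s n j)) (w j) + (\<Sum>i\<in>{..<n} - {j}. Phi (DC (cell s n i)) (w i))"
    by (rule sum.remove[OF finite_lessThan jn])
  have h2b: "(\<Sum>i\<in>{..<n} - {j}. Phi (DC (cell s n i)) (w i)) = (\<Sum>i\<in>{..<n} - {j}. Phi (DC (cell s n i)) (s i))"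
    by (rule sum.cong) (auto simp: w_def)
  have h2c: "w j = c" by (simp add: w_def)
  have 3: "(\<Sum>i<n. Phi (DC (cell s n i)) (s i)) = Phi (DC (cell s n j)) (s j) + (\<Sum>i\<in>{..<n} - {j}. Phi (DC (cell s n i)) (s i))"
    by (rule sum.remove[OF finite_lessThan jn])
  show "Phi (DC (cell (enum V) (card V) j)) (enum V j) \<le> Phi (DC (cell (enum V) (card V) j)) c"
    using 1 2 h2b h2c 3 unfolding s_def n_def by simp
qed

end


lemma ereal_between_left: assumes "a < ereal y0" "0 < (\<epsilon>::real)"
  shows "\<exists>\<alpha>. a < ereal \<alpha> \<and> y0 - \<epsilon> < \<alpha> \<and> \<alpha> < y0"
proof -
  have "max a (ereal (y0 - \<epsilon>)) < ereal y0" using assms by auto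
  then obtain z where "max a (ereal (y0 - \<epsilon>)) < ereal z" "ereal z < ereal y0" using ereal_dense2 by blast
  then show ?thesis by auto
qed

lemma ereal_between_right: assumes "ereal y0 < b" "0 < (\<epsilon>::real)"
  shows "\<exists>\<beta>. ereal \<beta> < b \<and> \<beta> < y0 + \<epsilon> \<and> y0 < \<beta>"
proof -
  have "ereal y0 < min b (ereal (y0 + \<epsilon>))" using assms by auto
  then obtain z where "ereal y0 < ereal z" "ereal z < min b (ereal (y0 + \<epsilon>))" using ereal_dense2 by blast
  then show ?thesis by auto
qed

lemma ereal_two_between: assumes "x < (y::ereal)" shows "\<exists>\<alpha> \<beta>. x < ereal \<alpha> \<and> \<alpha> < \<beta> \<and> ereal \<beta> < y"
proof -
  obtain z where z: "x < ereal z" "ereal z < y" using ereal_dense2[OF assms] by blast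
  obtain w where w: "ereal z < ereal w" "ereal w < y" using ereal_dense2[OF z(2)] by blast
  then show ?thesis using z by auto
qed

context pcore begin

lemma cmin_pos_left:
  assumes D: "MC D" and c: "cmin D c" and z: "\<And>y. y \<le> c \<Longrightarrow> D y = 0"
    and ab: "c \<le> \<alpha>" "\<alpha> < \<beta>" and pos: "\<And>y. \<alpha> < y \<Longrightarrow> y < \<beta> \<Longrightarrow> D y > 0"
  shows False
proof -
  have nn: "psi (y - c) * D y \<ge> 0" for y
    using z[of y] psi_pos[of "y - c"] MC_nonneg[OF D, of y] by (cases "y \<le> c") auto
  have "(\<integral>y. psi (y - c) * D y \<partial>lborel) = 0" using cmin_Hf0[OF D c] unfolding Hf_def .
  hence "AE y in lborel. psi (y - c) * D y = 0"
    using MC_int_psi[OF D, of c] nn by (subst (asm) integral_nonneg_eq_0_iff_AE) auto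
  moreover have "\<not> psi (y - c) * D y = 0" if "\<alpha> < y" "y < \<beta>" for y
    using psi_pos[of "y - c"] pos[OF that] that ab by auto
  ultimately show False using AE_Ioo_contra[OF _ ab(2)] by blast
qed

lemma cmin_pos_right:
  assumes D: "MC D" and c: "cmin D c" and z: "\<And>y. c \<le> y \<Longrightarrow> D y = 0"
    and ab: "\<beta> \<le> c" "\<alpha> < \<beta>" and pos: "\<And>y. \<alpha> < y \<Longrightarrow> y < \<beta> \<Longrightarrow> D y > 0"
  shows False
proof -
  have nn: "- (psi (y - c) * D y) \<ge> 0" for y
    using z[of y] psi_neg[of "y - c"] MC_nonneg[OF D, of y] by (cases "c \<le> y") (auto simp: mult_nonpos_nonneg)
  have "(\<integral>y. - (psi (y - c) * D y) \<partial>lborel) = 0" using cmin_Hf0[OF D c] unfolding Hf_def by simp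
  hence "AE y in lborel. - (psi (y - c) * D y) = 0"
    using MC_int_psi[OF D, of c] nn by (subst (asm) integral_nonneg_eq_0_iff_AE) auto
  moreover have "\<not> - (psi (y - c) * D y) = 0" if "\<alpha> < y" "y < \<beta>" for y
    using psi_neg[of "y - c"] pos[OF that] that ab by auto
  ultimately show False using AE_Ioo_contra[OF _ ab(2)] by blast
qed

end

context qset begin

lemma CS_nonneg_int: "0 \<le> infdist y V powr p * \<Psi> y" using Psi_nonneg by simp

lemma CS_mono_pointwise:
  assumes W: "w \<in> W" and V: "v \<in> V" and le: "\<And>y. \<Psi> y > 0 \<Longrightarrow> infdist y W \<le> infdist y V"
  shows "CS W \<le> CS V"
  unfolding CS_def
proof (rule integral_mono[OF CS_integrable[OF W] CS_integrable[OF V]])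
  fix y
  show "infdist y W powr p * \<Psi> y \<le> infdist y V powr p * \<Psi> y"
  proof (cases "\<Psi> y > 0")
    case True
    have "infdist y W powr p \<le> infdist y V powr p" using le[OF True] p1 by (intro powr_mono2) (auto simp: infdist_nonneg)
    then show ?thesis using True by (intro mult_right_mono) auto
  next
    case False
    then show ?thesis using Psi_nonneg[of y] by simp
  qed
qed

lemma CS_insert_less:
  assumes fin: "finite V" and ne: "V \<noteq> {}" and y0: "a < ereal y0" "ereal y0 < b" "y0 \<notin> V"
  shows "CS (insert y0 V) < CS V"
proof -
  obtain v where v: "v \<in> V" using ne by auto
  have cl: "closed V" using fin by (simp add: finite_imp_closed)
  define r where "r = infdist y0 V"
  have r: "r > 0" unfolding r_def using infdist_pos_not_in_closed[OF cl ne y0(3)] .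
  obtain \<alpha> where al: "a < ereal \<alpha>" "y0 - r/2 < \<alpha>" "\<alpha> < y0" using ereal_between_left[OF y0(1), of "r/2"] r by auto
  obtain \<beta> where be: "ereal \<beta> < b" "\<beta> < y0 + r/2" "y0 < \<beta>" using ereal_between_right[OF y0(2), of "r/2"] r by auto
  have le: "CS (insert y0 V) \<le> CS V"
    by (rule CS_mono_pointwise[OF insertI1 v]) (use ne in \<open>auto intro!: infdist_mono\<close>)
  have strict: "infdist y (insert y0 V) powr p * \<Psi> y < infdist y V powr p * \<Psi> y" if y: "\<alpha> < y" "y < \<beta>" for y
  proof -
    have "infdist y (insert y0 V) \<le> \<bar>y - y0\<bar>" using infdist_le[of y0 "insert y0 V" y] by (simp add: dist_real_def)
    also have "\<bar>y - y0\<bar> < r / 2" unfolding abs_less_iff using y al be by linarith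
    also have "r / 2 < infdist y V"
    proof -
      have "r \<le> infdist y V + \<bar>y0 - y\<bar>" unfolding r_def using infdist_triangle[of y0 V y] by (simp add: dist_real_def)
      moreover have "\<bar>y0 - y\<bar> < r / 2" unfolding abs_less_iff using y al be by linarith
      ultimately show ?thesis by simp
    qed
    finally have "infdist y (insert y0 V) < infdist y V" .
    hence "infdist y (insert y0 V) powr p < infdist y V powr p" using p1 by (intro powr_less_mono2) (auto simp: infdist_nonneg)
    moreover have "\<Psi> y > 0" using Psi_pos[of y] al be y
      by (meson ereal_less_eq(3) less_imp_le order_less_le_trans order_le_less_trans)
    ultimately show ?thesis by simp
  qed
  have "CS (insert y0 V) \<noteq> CS V"
  proof
    assume eq: "CS (insert y0 V) = CS V"
    have "(\<integral>y. infdist y V powr p * \<Psi> y - infdist y (insert y0 V) powr p * \<Psi> y \<partial>lborel) = 0"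
      using eq unfolding CS_def
      by (simp add: Bochner_Integration.integral_diff[OF CS_integrable[OF v] CS_integrable[OF insertI1]])
    moreover have "integrable lborel (\<lambda>y. infdist y V powr p * \<Psi> y - infdist y (insert y0 V) powr p * \<Psi> y)"
      using CS_integrable[OF v] CS_integrable[OF insertI1] by auto
    moreover have "0 \<le> infdist y V powr p * \<Psi> y - infdist y (insert y0 V) powr p * \<Psi> y" for y
    proof (cases "\<Psi> y > 0")
      case True
      have "infdist y (insert y0 V) \<le> infdist y V" using ne by (intro infdist_mono) auto
      hence "infdist y (insert y0 V) powr p \<le> infdist y V powr p" using p1 by (intro powr_mono2) (auto simp: infdist_nonneg)
      then show ?thesis using True by (simp add: mult_right_mono)
    next
      case False then show ?thesis using Psi_nonneg[of y] by simp
    qed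
    ultimately have "AE y in lborel. infdist y V powr p * \<Psi> y - infdist y (insert y0 V) powr p * \<Psi> y = 0"
      by (subst (asm) integral_nonneg_eq_0_iff_AE) auto
    moreover have "\<alpha> < \<beta>" using al be by simp
    ultimately show False using strict AE_Ioo_contra[of _ \<alpha> \<beta>] by force
  qed
  with le show ?thesis by simp
qed

lemma exists_new_point: assumes "finite V" shows "\<exists>y0. a < ereal y0 \<and> ereal y0 < b \<and> y0 \<notin> V"
proof -
  obtain \<alpha> \<beta> where ab': "a < ereal \<alpha>" "\<alpha> < \<beta>" "ereal \<beta> < b" using ereal_two_between[OF ab] by blast
  have "infinite {\<alpha><..<\<beta>}" using ab' by simp
  hence "{\<alpha><..<\<beta>} - V \<noteq> {}" using assms by (metis Diff_empty Diff_eq_empty_iff finite_subset)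
  then obtain y0 where "y0 \<in> {\<alpha><..<\<beta>}" "y0 \<notin> V" by blast
  moreover have "ereal \<alpha> < ereal y0" "ereal y0 < ereal \<beta>" using \<open>y0 \<in> {\<alpha><..<\<beta>}\<close> by auto
  hence "a < ereal y0" "ereal y0 < b" using less_trans[OF ab'(1)] less_trans[OF _ ab'(3)] by blast+
  ultimately show ?thesis by blast
qed

lemma opt_lt: assumes o: "opt k V" and W: "quant k W" "card W < k" shows "CS V < CS W"
proof -
  obtain y0 where y0: "a < ereal y0" "ereal y0 < b" "y0 \<notin> W" using exists_new_point W unfolding quant_def by blast
  have "quant k (insert y0 W)" using W y0 unfolding quant_def by auto
  hence "CS V \<le> CS (insert y0 W)" using o unfolding opt_def by auto
  also have "\<dots> < CS W" using CS_insert_less W y0 unfolding quant_def by auto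
  finally show ?thesis .
qed

lemma opt_card: assumes o: "opt k V" shows "card V = k"
proof (rule ccontr)
  assume "card V \<noteq> k"
  hence "card V < k" using o unfolding opt_def quant_def by auto
  then show False using opt_lt[OF o _ \<open>card V < k\<close>] o unfolding opt_def by auto
qed

end


lemma mid_gt: assumes "a < ereal u" "a < ereal v" shows "a < ereal ((u + v) / 2)"
proof -
  have "a < ereal (min u v)" using assms by (cases "u \<le> v") (auto simp: min_def)
  moreover have "min u v \<le> (u + v) / 2" by simp
  hence "ereal (min u v) \<le> ereal ((u + v) / 2)" by (simp only: ereal_less_eq(3))
  ultimately show ?thesis by (rule less_le_trans)
qed

lemma mid_lt: assumes "ereal u < b" "ereal v < b" shows "ereal ((u + v) / 2) < b"
proof -
  have 1: "ereal (max u v) < b" using assms by (cases "u \<le> v") (auto simp: max_def)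
  have "(u + v) / 2 \<le> max u v" by simp
  hence 2: "ereal ((u + v) / 2) \<le> ereal (max u v)" by (simp only: ereal_less_eq(3))
  show ?thesis by (rule le_less_trans[OF 2 1])
qed

lemma smono_le: "smono s k \<Longrightarrow> i \<le> j \<Longrightarrow> j < k \<Longrightarrow> s i \<le> s j"
  unfolding smono_def by (cases "i = j") (auto intro: less_imp_le)

lemma smono_less: "smono s k \<Longrightarrow> i < j \<Longrightarrow> j < k \<Longrightarrow> s i < s j"
  unfolding smono_def by auto

lemma T_mid: "0 < i \<Longrightarrow> i < k \<Longrightarrow> T s k i = ereal ((s (i - 1) + s i) / 2)"
  by (simp add: T_def)

lemma T_0[simp]: "T s k 0 = -\<infinity>" by (simp add: T_def)
lemma T_k[simp]: "k \<le> i \<Longrightarrow> 0 < i \<Longrightarrow> T s k i = \<infinity>" by (simp add: T_def)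

context qset begin

lemma opt_inside: assumes o: "opt k V" and j: "j < card V"
  shows "a < ereal (enum V j) \<and> ereal (enum V j) < b"
proof -
  define n where "n = card V"
  define s where "s = enum V"
  have fin: "finite V" and ne: "V \<noteq> {}" and kn: "n \<le> k" using o unfolding opt_def quant_def n_def by auto
  have n0: "0 < n" using fin ne unfolding n_def by (simp add: card_gt_0_iff)
  have sm: "smono s n" and sV: "s ` {..<n} = V" using enum_props[OF fin] unfolding s_def n_def by auto
  have cm: "cmin (DC (cell s n i)) (s i)" if "i < n" for i using opt_cmin[OF o] that unfolding s_def n_def by auto
  have ab_inf: "a \<noteq> \<infinity>" "b \<noteq> -\<infinity>" using ab by auto
  have left: "a < ereal (s 0)"
  proof (rule ccontr)
    assume "\<not> a < ereal (s 0)"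
    hence s0: "ereal (s 0) \<le> a" by simp
    show False
    proof (cases "T s n 1 \<le> a")
      case True
      have n2: "1 < n"
      proof (rule ccontr)
        assume "\<not> 1 < n" hence "n = 1" using n0 by simp
        then show False using True ab_inf by (simp add: T_def)
      qed
      define W where "W = s ` {1..<n}"
      have qW: "quant k W" unfolding quant_def W_def using n2 kn
        by (auto intro: order_trans[OF card_image_le])
      have "card W \<le> n - 1" unfolding W_def using card_image_le[of "{1..<n}" s] by simp
      hence cW: "card W < k" using n2 kn by arith
      have "CS W \<le> CS V"
      proof (rule CS_mono_pointwise[of "s 1" _ "s 0"])
        show "s 1 \<in> W" using n2 by (auto simp: W_def)
        show "s 0 \<in> V" using sV n0 by auto
        fix y assume "\<Psi> y > 0"
        hence ya: "a < ereal y" using Psi_pos_iff by auto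
        obtain i where i: "i < n" "y \<in> cell s n i" using cell_ex[OF sm n0] by blast
        have "i \<noteq> 0"
        proof
          assume "i = 0"
          hence "ereal y < T s n 1" using i unfolding cell_def by simp
          then show False using True ya by simp
        qed
        hence "s i \<in> W" using i by (auto simp: W_def)
        hence "infdist y W \<le> \<bar>y - s i\<bar>" using infdist_le[of "s i" W y] by (simp add: dist_real_def)
        also have "\<dots> = infdist y V" using infdist_cell[OF sm i(2,1)] sV by simp
        finally show "infdist y W \<le> infdist y V" .
      qed
      moreover have "CS V < CS W" by (rule opt_lt[OF o qW cW])
      ultimately show False by simp
    next
      case False
      hence "a < min (T s n 1) b" using ab by simp
      then obtain \<alpha> \<beta> where al: "a < ereal \<alpha>" "\<alpha> < \<beta>" "ereal \<beta> < min (T s n 1) b"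
        using ereal_two_between by blast
      show False
      proof (rule cmin_pos_left[OF MC_DC[OF cell_sets] cm[OF n0] _ _ al(2)])
        fix y assume "y \<le> s 0"
        hence "ereal y \<le> a" using s0 by (meson ereal_less_eq(3) order_trans)
        hence "\<Psi> y = 0" by (intro Psi_zero) auto
        then show "DC (cell s n 0) y = 0" unfolding DC_def by simp
      next
        show "s 0 \<le> \<alpha>" using s0 al(1) by (meson ereal_less_eq(3) le_less_trans less_imp_le)
      next
        fix y assume y: "\<alpha> < y" "y < \<beta>"
        have yb: "ereal y < ereal \<beta>" and ya: "ereal \<alpha> < ereal y" using y by auto
        have b1: "ereal \<beta> < T s n 1" "ereal \<beta> < b" using al(3) by auto
        have yy: "ereal y < T s n 1" "ereal y < b" "a < ereal y"
          using less_trans[OF yb b1(1)] less_trans[OF yb b1(2)] less_trans[OF al(1) ya] by auto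
        then show "DC (cell s n 0) y > 0" unfolding DC_def cell_def using Psi_pos by auto
      qed
    qed
  qed
  have right: "ereal (s (n - 1)) < b"
  proof (rule ccontr)
    assume "\<not> ereal (s (n - 1)) < b"
    hence s0: "b \<le> ereal (s (n - 1))" by simp
    have nn: "n - 1 < n" using n0 by simp
    show False
    proof (cases "b \<le> T s n (n - 1)")
      case True
      have n2: "1 < n"
      proof (rule ccontr)
        assume "\<not> 1 < n" hence "n = 1" using n0 by simp
        then show False using True ab_inf by (simp add: T_def)
      qed
      define W where "W = s ` {..<n - 1}"
      have "s 0 \<in> W" using n2 by (simp add: W_def)
      moreover have "card W \<le> k" unfolding W_def using card_image_le[of "{..<n - 1}" s] kn by simp
      ultimately have qW: "quant k W" unfolding quant_def W_def by auto
      have "card W \<le> n - 1" unfolding W_def using card_image_le[of "{..<n - 1}" s] by simp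
      hence cW: "card W < k" using n2 kn by arith
      have "CS W \<le> CS V"
      proof (rule CS_mono_pointwise[of "s 0" _ "s 0"])
        show "s 0 \<in> W" using n2 by (auto simp: W_def)
        show "s 0 \<in> V" using sV n0 by auto
        fix y assume "\<Psi> y > 0"
        hence yb: "ereal y < b" using Psi_pos_iff by auto
        obtain i where i: "i < n" "y \<in> cell s n i" using cell_ex[OF sm n0] by blast
        have "i \<noteq> n - 1"
        proof
          assume "i = n - 1"
          hence "T s n (n - 1) \<le> ereal y" using i unfolding cell_def by simp
          then show False using True yb by simp
        qed
        hence "s i \<in> W" using i by (auto simp: W_def)
        hence "infdist y W \<le> \<bar>y - s i\<bar>" using infdist_le[of "s i" W y] by (simp add: dist_real_def)
        also have "\<dots> = infdist y V" using infdist_cell[OF sm i(2,1)] sV by simp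
        finally show "infdist y W \<le> infdist y V" .
      qed
      moreover have "CS V < CS W" by (rule opt_lt[OF o qW cW])
      ultimately show False by simp
    next
      case False
      hence "max (T s n (n - 1)) a < b" using ab by simp
      then obtain \<alpha> \<beta> where al: "max (T s n (n - 1)) a < ereal \<alpha>" "\<alpha> < \<beta>" "ereal \<beta> < b"
        using ereal_two_between by blast
      show False
      proof (rule cmin_pos_right[OF MC_DC[OF cell_sets] cm[OF nn] _ _ al(2)])
        fix y assume "s (n - 1) \<le> y"
        hence "b \<le> ereal y" using s0 by (meson ereal_less_eq(3) order_trans)
        hence "\<Psi> y = 0" by (intro Psi_zero) auto
        then show "DC (cell s n (n - 1)) y = 0" unfolding DC_def by simp
      next
        show "\<beta> \<le> s (n - 1)" using s0 al(3) by (meson ereal_less_eq(3) less_le_trans less_imp_le)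
      next
        fix y assume y: "\<alpha> < y" "y < \<beta>"
        have yb: "ereal y < ereal \<beta>" and ya: "ereal \<alpha> < ereal y" using y by auto
        have b1: "T s n (n - 1) < ereal \<alpha>" "a < ereal \<alpha>" using al(1) by auto
        have yy: "T s n (n - 1) < ereal y" "ereal y < b" "a < ereal y"
          using less_trans[OF b1(1) ya] less_trans[OF yb al(3)] less_trans[OF b1(2) ya] by auto
        moreover have "T s n (Suc (n - 1)) = \<infinity>" using n0 by simp
        ultimately show "DC (cell s n (n - 1)) y > 0" unfolding DC_def cell_def using Psi_pos by auto
      qed
    qed
  qed
  have "s 0 \<le> s j" using smono_le[OF sm] j unfolding n_def by auto
  moreover have "s j \<le> s (n - 1)" using smono_le[OF sm, of j "n - 1"] j n0 unfolding n_def by auto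
  ultimately show ?thesis using left right unfolding s_def
    by (meson ereal_less_eq(3) less_le_trans le_less_trans)
qed

end


context qset begin

lemma cell_step:
  assumes sm: "smono s k" "smono s' k" and j: "j < k"
    and ins: "\<And>i. i < k \<Longrightarrow> a < ereal (s i) \<and> ereal (s i) < b"
        "\<And>i. i < k \<Longrightarrow> a < ereal (s' i) \<and> ereal (s' i) < b"
    and cm: "cmin (DC (cell s k j)) (s j)" "cmin (DC (cell s' k j)) (s' j)"
    and e0: "s j \<le> s' j"
    and L: "0 < j \<Longrightarrow> (s' (j-1) + s' j)/2 - (s (j-1) + s j)/2 \<le> s' j - s j"
    and R: "Suc j < k \<Longrightarrow> (s' j + s' (Suc j))/2 - (s j + s (Suc j))/2 \<le> s' j - s j"
  shows cs_ae: "AE y in lborel. DC (cell s' k j) (y + (s' j - s j)) = (\<Psi> (s' j) / \<Psi> (s j)) * DC (cell s k j) y"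
   and cs_L: "0 < j \<Longrightarrow> (s' (j-1) + s' j)/2 - (s (j-1) + s j)/2 = s' j - s j"
   and cs_R: "Suc j < k \<Longrightarrow> (s' j + s' (Suc j))/2 - (s j + s (Suc j))/2 = s' j - s j"
   and cs_a: "j = 0 \<Longrightarrow> s j < s' j \<Longrightarrow> a = -\<infinity>"
   and cs_b: "Suc j = k \<Longrightarrow> s j < s' j \<Longrightarrow> b = \<infinity>"
proof -
  define e where "e = s' j - s j"
  have e0': "0 \<le> e" using e0 by (simp add: e_def)
  have sje: "s j + e = s' j" by (simp add: e_def)
  have insj: "a < ereal (s j)" "ereal (s j) < b" "a < ereal (s' j)" "ereal (s' j) < b" using ins j by auto
  have Pj: "\<Psi> (s j) > 0" "\<Psi> (s' j) > 0" using Psi_pos insj by auto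
  have kpos: "\<Psi> (s' j) / \<Psi> (s j) > 0" using Pj by simp
  have LL: "T s' k j \<le> T s k j + ereal e"
  proof (cases "j = 0")
    case False
    have "0 < j" using False by simp
    hence "(s' (j-1) + s' j)/2 - (s (j-1) + s j)/2 \<le> s' j - s j" by (rule L)
    hence "(s' (j-1) + s' j)/2 \<le> (s (j-1) + s j)/2 + e" unfolding e_def by linarith
    then show ?thesis using False j by (simp add: T_mid)
  qed simp
  have RR: "T s' k (Suc j) \<le> T s k (Suc j) + ereal e"
  proof (cases "Suc j < k")
    case True
    have "(s' j + s' (Suc j))/2 - (s j + s (Suc j))/2 \<le> s' j - s j" using True by (rule R)
    hence "(s' j + s' (Suc j))/2 \<le> (s j + s (Suc j))/2 + e" unfolding e_def by linarith
    then show ?thesis using True by (simp add: T_mid)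
  next
    case False
    then show ?thesis using j by simp
  qed
  have AE: "AE y in lborel. DC (cell s' k j) (y + e) = (\<Psi> (s' j) / \<Psi> (s j)) * DC (cell s k j) y"
    using ccl[where L="T s k j" and R="T s k (Suc j)" and L'="T s' k j" and R'="T s' k (Suc j)"
        and m="s j" and e=e] insj e0' s_in_cell[OF sm(1) j] s_in_cell[OF sm(2) j] LL RR cm
    unfolding sje cell_def by simp
  then show "AE y in lborel. DC (cell s' k j) (y + (s' j - s j)) = (\<Psi> (s' j) / \<Psi> (s j)) * DC (cell s k j) y"
    by (simp add: e_def)
  show "(s' (j-1) + s' j)/2 - (s (j-1) + s j)/2 = s' j - s j" if j0: "0 < j"
  proof (rule ccontr)
    define tt where "tt = (s (j-1) + s j)/2"
    define tt' where "tt' = (s' (j-1) + s' j)/2"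
    assume "\<not> ?thesis"
    hence lt: "tt' - tt < e" using L[OF j0] unfolding tt_def tt'_def e_def by simp
    have jm: "j - 1 < j" "j - 1 < k" using j0 j by auto
    have tts: "tt' < s' j" using smono_less[OF sm(2) jm(1) j] unfolding tt'_def by simp
    have att: "a < ereal tt'" unfolding tt'_def using ins[of "j-1"] ins[of j] jm j by (intro mid_gt) auto
    have Tj: "T s k j = ereal tt" "T s' k j = ereal tt'" using j0 j by (simp_all add: T_mid tt_def tt'_def)
    show False
    proof (rule AE_Ioo_contra[OF AE, of "tt' - e" "min tt (s' j - e)"])
      show "tt' - e < min tt (s' j - e)" using lt tts by simp
      fix y assume y: "tt' - e < y" "y < min tt (s' j - e)"
      have "ereal y < T s k j" using y Tj by simp
      hence r: "DC (cell s k j) y = 0" by (simp add: DC_def cell_def indicator_def not_le)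
      have c1: "T s' k j \<le> ereal (y + e)" using y Tj by simp
      have "ereal (y + e) < ereal (s' j)" using y by simp
      hence c2: "ereal (y + e) < T s' k (Suc j)" using s_in_cell(2)[OF sm(2) j] by (rule less_trans)
      have c3: "ereal (y + e) < b" using \<open>ereal (y + e) < ereal (s' j)\<close> insj(4) by (rule less_trans)
      have "ereal tt' < ereal (y + e)" using y by simp
      hence c4: "a < ereal (y + e)" using att by (rule less_trans[rotated])
      have "DC (cell s' k j) (y + e) > 0" using c1 c2 c3 c4 Psi_pos by (simp add: DC_def cell_def)
      then show "\<not> DC (cell s' k j) (y + e) = \<Psi> (s' j) / \<Psi> (s j) * DC (cell s k j) y" using r by simp
    qed
  qed
  show "(s' j + s' (Suc j))/2 - (s j + s (Suc j))/2 = s' j - s j" if j1: "Suc j < k"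
  proof (rule ccontr)
    define tt where "tt = (s j + s (Suc j))/2"
    define tt' where "tt' = (s' j + s' (Suc j))/2"
    assume "\<not> ?thesis"
    hence lt: "tt' - tt < e" using R[OF j1] unfolding tt_def tt'_def e_def by simp
    have stt: "s j < tt" using smono_less[OF sm(1) _ j1, of j] unfolding tt_def by simp
    have ttb: "ereal tt < b" unfolding tt_def using ins[of j] ins[of "Suc j"] j1 j by (intro mid_lt) auto
    have Tj: "T s k (Suc j) = ereal tt" "T s' k (Suc j) = ereal tt'" using j1 by (simp_all add: T_mid tt_def tt'_def)
    show False
    proof (rule AE_Ioo_contra[OF AE, of "max (tt' - e) (s j)" "tt"])
      show "max (tt' - e) (s j) < tt" using lt stt by simp
      fix y assume y: "max (tt' - e) (s j) < y" "y < tt"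
      have "T s' k (Suc j) \<le> ereal (y + e)" using y Tj by simp
      hence l: "DC (cell s' k j) (y + e) = 0" by (simp add: DC_def cell_def indicator_def not_less)
      have "ereal (s j) < ereal y" using y by simp
      hence c1: "T s k j \<le> ereal y" using s_in_cell(1)[OF sm(1) j] by (meson less_trans less_imp_le)
      have c2: "ereal y < T s k (Suc j)" using y Tj by simp
      have c3: "a < ereal y" using insj(1) \<open>ereal (s j) < ereal y\<close> by (rule less_trans)
      have "ereal y < ereal tt" using y by simp
      hence c4: "ereal y < b" using ttb by (rule less_trans)
      have "DC (cell s k j) y > 0" using c1 c2 c3 c4 Psi_pos by (simp add: DC_def cell_def)
      hence "\<Psi> (s' j) / \<Psi> (s j) * DC (cell s k j) y > 0" by (rule mult_pos_pos[OF kpos])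
      then show "\<not> DC (cell s' k j) (y + e) = \<Psi> (s' j) / \<Psi> (s j) * DC (cell s k j) y" using l by (metis less_irrefl)
    qed
  qed
  show "a = -\<infinity>" if j0: "j = 0" and es: "s j < s' j"
  proof (rule ccontr)
    assume an: "a \<noteq> -\<infinity>"
    have "a \<noteq> \<infinity>" using insj(1) by auto
    then obtain A where A: "a = ereal A" using an by (cases a) auto
    have ep: "0 < e" using es by (simp add: e_def)
    have As: "A < s' j" using insj(3) A by simp
    show False
    proof (rule AE_Ioo_contra[OF AE, of "A - e" "min A (s' j - e)"])
      show "A - e < min A (s' j - e)" using ep As by simp
      fix y assume y: "A - e < y" "y < min A (s' j - e)"
      have "\<Psi> y = 0" using Psi_zero[of y] y A by auto
      hence r: "DC (cell s k j) y = 0" by (simp add: DC_def)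
      have "ereal (y + e) < ereal (s' j)" using y by simp
      hence c2: "ereal (y + e) < T s' k (Suc j)" using s_in_cell(2)[OF sm(2) j] by (rule less_trans)
      have c3: "ereal (y + e) < b" using \<open>ereal (y + e) < ereal (s' j)\<close> insj(4) by (rule less_trans)
      have c4: "a < ereal (y + e)" using y A by simp
      have "DC (cell s' k j) (y + e) > 0" using c2 c3 c4 Psi_pos j0 by (simp add: DC_def cell_def)
      then show "\<not> DC (cell s' k j) (y + e) = \<Psi> (s' j) / \<Psi> (s j) * DC (cell s k j) y" using r by simp
    qed
  qed
  show "b = \<infinity>" if j0: "Suc j = k" and es: "s j < s' j"
  proof (rule ccontr)
    assume bn: "b \<noteq> \<infinity>"
    have "b \<noteq> -\<infinity>" using insj(2) by auto
    then obtain B where B: "b = ereal B" using bn by (cases b) auto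
    have ep: "0 < e" using es by (simp add: e_def)
    have sB: "s j < B" using insj(2) B by simp
    show False
    proof (rule AE_Ioo_contra[OF AE, of "max (B - e) (s j)" "B"])
      show "max (B - e) (s j) < B" using ep sB by simp
      fix y assume y: "max (B - e) (s j) < y" "y < B"
      have "\<Psi> (y + e) = 0" using Psi_zero[of "y + e"] y B by auto
      hence l: "DC (cell s' k j) (y + e) = 0" by (simp add: DC_def)
      have "ereal (s j) < ereal y" using y by simp
      hence c1: "T s k j \<le> ereal y" using s_in_cell(1)[OF sm(1) j] by (meson less_trans less_imp_le)
      have c2: "T s k (Suc j) = \<infinity>" using j0 by simp
      have c3: "a < ereal y" using insj(1) \<open>ereal (s j) < ereal y\<close> by (rule less_trans)
      have c4: "ereal y < b" using y B by simp
      have "DC (cell s k j) y > 0" using c1 c2 c3 c4 Psi_pos by (simp add: DC_def cell_def)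
      hence "\<Psi> (s' j) / \<Psi> (s j) * DC (cell s k j) y > 0" by (rule mult_pos_pos[OF kpos])
      then show "\<not> DC (cell s' k j) (y + e) = \<Psi> (s' j) / \<Psi> (s j) * DC (cell s k j) y" using l by (metis less_irrefl)
    qed
  qed
qed

end


context qset begin

lemma chain_shift:
  assumes k2: "2 \<le> k" and sm: "smono s k" "smono s' k"
    and ins: "\<And>i. i < k \<Longrightarrow> a < ereal (s i) \<and> ereal (s i) < b"
        "\<And>i. i < k \<Longrightarrow> a < ereal (s' i) \<and> ereal (s' i) < b"
    and cm: "\<And>j. j < k \<Longrightarrow> cmin (DC (cell s k j)) (s j)" "\<And>j. j < k \<Longrightarrow> cmin (DC (cell s' k j)) (s' j)"
    and d1: "s 0 + s 1 \<le> s' 0 + s' 1"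
  shows "\<forall>i<k. s' i - s i = s' 0 - s 0"
proof -
  define e where "e i = s' i - s i" for i
  define \<delta> where "\<delta> i = (s' (i-1) + s' i)/2 - (s (i-1) + s i)/2" for i
  have \<delta>e: "\<delta> (Suc i) = (e i + e (Suc i)) / 2" for i by (simp add: \<delta>_def e_def field_simps)
  have CR: "\<delta> (Suc j') = e j'"
    if j': "j' < k" "Suc j' < k" "0 \<le> e j'" "0 < j' \<Longrightarrow> \<delta> j' \<le> e j'" "\<delta> (Suc j') \<le> e j'" for j'
  proof -
    have "(s' j' + s' (Suc j'))/2 - (s j' + s (Suc j'))/2 = s' j' - s j'"
      by (rule cs_R[OF sm j'(1) ins cm(1)[OF j'(1)] cm(2)[OF j'(1)]]) (use j' in \<open>auto simp: e_def \<delta>_def\<close>)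
    then show ?thesis by (simp add: e_def \<delta>_def)
  qed
  have CL: "\<delta> j' = e j'"
    if j': "j' < k" "0 < j'" "0 \<le> e j'" "\<delta> j' \<le> e j'" "Suc j' < k \<Longrightarrow> \<delta> (Suc j') \<le> e j'" for j'
  proof -
    have "(s' (j'-1) + s' j')/2 - (s (j'-1) + s j')/2 = s' j' - s j'"
      by (rule cs_L[OF sm j'(1) ins cm(1)[OF j'(1)] cm(2)[OF j'(1)]]) (use j' in \<open>auto simp: e_def \<delta>_def\<close>)
    then show ?thesis by (simp add: e_def \<delta>_def)
  qed
  have INV: "e j \<le> \<delta> (Suc j) \<and> 0 \<le> \<delta> (Suc j) \<and> (e j = \<delta> (Suc j) \<longrightarrow> (\<forall>i\<le>j. e i = e 0))"
    if "Suc j < k" for j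
    using that
  proof (induction j)
    case 0
    have d0: "0 \<le> \<delta> (Suc 0)" using d1 by (simp add: \<delta>_def)
    have "e 0 \<le> \<delta> (Suc 0)"
    proof (rule ccontr)
      assume "\<not> e 0 \<le> \<delta> (Suc 0)"
      hence lt: "\<delta> (Suc 0) < e 0" by simp
      have "\<delta> (Suc 0) = e 0" using CR[of 0] 0 lt d0 by simp
      then show False using lt by simp
    qed
    moreover have "\<forall>i\<le>(0::nat). e i = e 0" by simp
    ultimately show ?case using d0 by blast
  next
    case (Suc j)
    have j1: "Suc j < k" using Suc.prems by simp
    from Suc.IH[OF j1] have IH: "e j \<le> \<delta> (Suc j)" "0 \<le> \<delta> (Suc j)" "e j = \<delta> (Suc j) \<longrightarrow> (\<forall>i\<le>j. e i = e 0)"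
      by blast+
    have ge: "\<delta> (Suc j) \<le> e (Suc j)" using IH(1) \<delta>e[of j] by simp
    have e0: "0 \<le> e (Suc j)" using ge IH(2) by simp
    have le: "e (Suc j) \<le> \<delta> (Suc (Suc j))"
    proof (rule ccontr)
      assume "\<not> ?thesis"
      hence lt: "\<delta> (Suc (Suc j)) < e (Suc j)" by simp
      have "\<delta> (Suc (Suc j)) = e (Suc j)" using CR[of "Suc j"] Suc.prems lt ge e0 j1 by simp
      then show False using lt by simp
    qed
    moreover have "0 \<le> \<delta> (Suc (Suc j))" using le e0 by simp
    moreover have "\<forall>i\<le>Suc j. e i = e 0" if eq: "e (Suc j) = \<delta> (Suc (Suc j))"
    proof -
      have "\<delta> (Suc j) = e (Suc j)" using CL[of "Suc j"] Suc.prems eq ge e0 j1 by simp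
      hence "e j = \<delta> (Suc j)" using \<delta>e[of j] by simp
      hence all: "\<forall>i\<le>j. e i = e 0" using IH(3) by blast
      have ej: "e j = e 0" using all by blast
      have "e (Suc j) = e j" using \<open>\<delta> (Suc j) = e (Suc j)\<close> \<open>e j = \<delta> (Suc j)\<close> by simp
      hence es: "e (Suc j) = e 0" using ej by simp
      show ?thesis
      proof (intro allI impI)
        fix i assume "i \<le> Suc j"
        then consider "i \<le> j" | "i = Suc j" by linarith
        then show "e i = e 0"
        proof cases
          case 1 then show ?thesis using all by blast
        next
          case 2 then show ?thesis using es by simp
        qed
      qed
    qed
    ultimately show ?case by blast
  qed
  define j where "j = k - 2"
  have jk: "Suc j < k" "Suc (Suc j) = k" using k2 by (auto simp: j_def)
  from INV[OF jk(1)] have I: "e j \<le> \<delta> (Suc j)" "0 \<le> \<delta> (Suc j)" "e j = \<delta> (Suc j) \<longrightarrow> (\<forall>i\<le>j. e i = e 0)"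
    by blast+
  have ge: "\<delta> (Suc j) \<le> e (Suc j)" using I(1) \<delta>e[of j] by simp
  have e0: "0 \<le> e (Suc j)" using ge I(2) by simp
  have "\<delta> (Suc j) = e (Suc j)" using CL[of "Suc j"] jk ge e0 by simp
  hence "e j = \<delta> (Suc j)" using \<delta>e[of j] by simp
  hence all: "\<forall>i\<le>j. e i = e 0" using I(3) by blast
  have ej: "e j = e 0" using all by blast
  have es: "e (Suc j) = e 0" using ej \<open>e j = \<delta> (Suc j)\<close> \<open>\<delta> (Suc j) = e (Suc j)\<close> by simp
  have "\<forall>i<k. e i = e 0"
  proof (intro allI impI)
    fix i assume "i < k"
    then consider "i \<le> j" | "i = Suc j" using jk by linarith
    then show "e i = e 0"
    proof cases
      case 1 then show ?thesis using all by blast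
    next
      case 2 then show ?thesis using es by simp
    qed
  qed
  then show ?thesis unfolding e_def by blast
qed

end


lemma periodic_contra:
  fixes \<Psi> :: "real \<Rightarrow> real"
  assumes cont: "continuous_on UNIV \<Psi>" and pos: "\<And>y. \<Psi> y > 0" and E: "0 < E"
    and per: "\<And>y. \<Psi> (y + E) = c * \<Psi> y" and int: "integrable lborel \<Psi>"
  shows False
proof -
  have meas[measurable]: "\<Psi> \<in> borel_measurable borel" using int by auto
  have i1: "(\<integral>y. \<Psi> y \<partial>lborel) = (\<integral>y. \<Psi> (y + E) \<partial>lborel)"
    using lborel_integral_real_affine[of 1 \<Psi> E] by (simp add: add.commute)
  also have "\<dots> = c * (\<integral>y. \<Psi> y \<partial>lborel)" by (simp add: per)
  finally have ceq: "(\<integral>y. \<Psi> y \<partial>lborel) = c * (\<integral>y. \<Psi> y \<partial>lborel)" .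
  have ipos: "(\<integral>y. \<Psi> y \<partial>lborel) \<noteq> 0"
  proof
    assume "(\<integral>y. \<Psi> y \<partial>lborel) = 0"
    hence "AE y in lborel. \<Psi> y = 0" using int pos by (subst (asm) integral_nonneg_eq_0_iff_AE) (auto intro: less_imp_le)
    then show False
    proof (rule AE_Ioo_contra[where \<alpha>=0 and \<beta>=1])
      fix y show "\<not> \<Psi> y = 0" using pos[of y] by simp
    qed simp
  qed
  have c1: "c = 1" using ceq ipos by simp
  have pn: "\<Psi> (y + real n * E) = \<Psi> y" for y n
  proof (induction n)
    case (Suc n)
    have "y + real (Suc n) * E = (y + real n * E) + E" by (simp add: distrib_right)
    hence "\<Psi> (y + real (Suc n) * E) = \<Psi> ((y + real n * E) + E)" by (simp only:)
    also have "\<dots> = c * \<Psi> (y + real n * E)" by (rule per)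
    finally have "\<Psi> (y + real (Suc n) * E) = c * \<Psi> (y + real n * E)" .
    then show ?case using Suc.IH c1 by simp
  qed simp
  obtain x0 where x0: "x0 \<in> {0..E}" "\<forall>y\<in>{0..E}. \<Psi> x0 \<le> \<Psi> y"
    using continuous_attains_inf[of "{0..E}" \<Psi>] E continuous_on_subset[OF cont] by auto
  define m0 where "m0 = \<Psi> x0"
  have m0: "m0 > 0" using pos unfolding m0_def by simp
  have lb: "m0 \<le> \<Psi> y" for y
  proof -
    define n where "n = \<lfloor>y / E\<rfloor>"
    define r where "r = y - of_int n * E"
    have "of_int n \<le> y / E" "y / E < of_int n + 1" unfolding n_def by linarith+
    hence r0: "0 \<le> r" "r \<le> E" unfolding r_def using E by (auto simp: field_simps)
    have "\<Psi> y = \<Psi> r"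
    proof (cases "n \<ge> 0")
      case True
      have "y = r + real (nat n) * E" unfolding r_def using True by simp
      then show ?thesis using pn[of r "nat n"] by simp
    next
      case False
      have "r = y + real (nat (- n)) * E" unfolding r_def using False by simp
      then show ?thesis using pn[of y "nat (- n)"] by simp
    qed
    then show ?thesis using x0 r0 unfolding m0_def by auto
  qed
  have "(\<integral>\<^sup>+ (y::real). ennreal m0 \<partial>lborel) \<le> (\<integral>\<^sup>+ y. ennreal (\<Psi> y) \<partial>lborel)"
    by (rule Nonnegative_Lebesgue_Integration.nn_integral_mono) (simp add: lb ennreal_leI)
  moreover have "(\<integral>\<^sup>+ (y::real). ennreal m0 \<partial>lborel) = \<infinity>" using m0 by (simp add: ennreal_mult_top)
  moreover have "(\<integral>\<^sup>+ y. ennreal (\<Psi> y) \<partial>lborel) \<noteq> \<infinity>" using integrableD(2)[OF int] .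
  ultimately show False by (simp add: top_unique)
qed

context qset begin

lemma T_shift: assumes "\<forall>i<k. s' i - s i = E" shows "T s' k i = T s k i + ereal E"
proof -
  consider "i = 0" | "0 < i" "k \<le> i" | "0 < i" "i < k" by linarith
  then show ?thesis
  proof cases
    case 3
    have "i - 1 < k" using 3 by simp
    hence "s' (i - 1) - s (i - 1) = E" "s' i - s i = E" using assms 3 by blast+
    hence "s' (i - 1) = s (i - 1) + E" "s' i = s i + E" by simp_all
    then show ?thesis using 3 by (simp add: T_mid field_simps)
  qed simp_all
qed

lemma cell_shift: assumes "\<forall>i<k. s' i - s i = E" shows "y + E \<in> cell s' k j \<longleftrightarrow> y \<in> cell s k j"
proof -
  have a: "T s k j + ereal E \<le> ereal (y + E) \<longleftrightarrow> T s k j \<le> ereal y" by (cases "T s k j") auto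
  have b: "ereal (y + E) < T s k (Suc j) + ereal E \<longleftrightarrow> ereal y < T s k (Suc j)" by (cases "T s k (Suc j)") auto
  show ?thesis unfolding cell_def using T_shift[OF assms] a b by simp
qed

lemma G_open_cell:
  assumes ainf: "a = -\<infinity>" and binf: "b = \<infinity>" and E: "0 < E"
    and AE: "AE y in lborel. y \<in> cell s k j \<longrightarrow> \<Psi> (y + E) = \<kappa> * \<Psi> y"
    and y0: "T s k j < ereal y0" "ereal y0 < T s k (Suc j)"
  shows "Gs \<Psi> E y0 = \<kappa>"
proof -
  have Pp: "\<Psi> y > 0" for y using Psi_pos ainf binf by simp
  have Eb: "ereal E < b - a" using ainf binf by simp
  obtain \<alpha> where al: "T s k j < ereal \<alpha>" "ereal \<alpha> < ereal y0" using ereal_dense2[OF y0(1)] by blast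
  obtain \<beta> where be: "ereal y0 < ereal \<beta>" "ereal \<beta> < T s k (Suc j)" using ereal_dense2[OF y0(2)] by blast
  have ab': "\<alpha> < y0" "y0 < \<beta>" using al be by auto
  obtain y1 where y1: "\<alpha> < y1" "y1 < y0" "y1 \<in> cell s k j \<longrightarrow> \<Psi> (y1 + E) = \<kappa> * \<Psi> y1"
    using AE_Ioo_ex[OF AE ab'(1)] by blast
  obtain y2 where y2: "y0 < y2" "y2 < \<beta>" "y2 \<in> cell s k j \<longrightarrow> \<Psi> (y2 + E) = \<kappa> * \<Psi> y2"
    using AE_Ioo_ex[OF AE ab'(2)] by blast
  have "ereal \<alpha> < ereal y1" "ereal y1 < ereal y0" using y1 by auto
  hence "T s k j \<le> ereal y1" "ereal y1 < T s k (Suc j)" using al y0 by (meson less_trans less_imp_le)+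
  hence g1: "Gs \<Psi> E y1 = \<kappa>" using y1 Pp[of y1] by (simp add: cell_def Gs_def)
  have "ereal y0 < ereal y2" "ereal y2 < ereal \<beta>" using y2 by auto
  hence "T s k j \<le> ereal y2" "ereal y2 < T s k (Suc j)" using be y0 by (meson less_trans less_imp_le)+
  hence g2: "Gs \<Psi> E y2 = \<kappa>" using y2 Pp[of y2] by (simp add: cell_def Gs_def)
  have "Gs \<Psi> E y0 \<le> Gs \<Psi> E y1" using G_mono[OF E Eb, of y1 y0] y1 ainf binf by simp
  moreover have "Gs \<Psi> E y2 \<le> Gs \<Psi> E y0" using G_mono[OF E Eb, of y0 y2] y2 ainf binf by simp
  ultimately show ?thesis using g1 g2 by simp
qed

lemma G_finite_image:
  assumes ainf: "a = -\<infinity>" and binf: "b = \<infinity>" and E: "0 < E" and sm: "smono s k" and k0: "0 < k"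
    and AE: "\<And>j. j < k \<Longrightarrow> AE y in lborel. y \<in> cell s k j \<longrightarrow> \<Psi> (y + E) = \<kappa> j * \<Psi> y"
  shows "finite (Gs \<Psi> E ` UNIV)"
proof (rule finite_subset)
  show "Gs \<Psi> E ` UNIV \<subseteq> \<kappa> ` {..<k} \<union> (\<lambda>i. Gs \<Psi> E ((s (i - 1) + s i) / 2)) ` {1..<k}"
  proof
    fix g assume "g \<in> Gs \<Psi> E ` UNIV"
    then obtain y where y: "g = Gs \<Psi> E y" by auto
    obtain j where j: "j < k" "y \<in> cell s k j" using cell_ex[OF sm k0] by blast
    show "g \<in> \<kappa> ` {..<k} \<union> (\<lambda>i. Gs \<Psi> E ((s (i - 1) + s i) / 2)) ` {1..<k}"
    proof (cases "T s k j = ereal y")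
      case True
      hence j0: "0 < j" by (cases "j = 0") auto
      hence yeq: "y = (s (j - 1) + s j) / 2" using True j by (simp add: T_mid)
      have "g = (\<lambda>i. Gs \<Psi> E ((s (i - 1) + s i) / 2)) j" by (simp only: y yeq)
      moreover have "j \<in> {1..<k}" using j j0 by simp
      ultimately show ?thesis by blast
    next
      case False
      hence "T s k j < ereal y" "ereal y < T s k (Suc j)" using j unfolding cell_def by auto
      hence "Gs \<Psi> E y = \<kappa> j" by (intro G_open_cell[OF ainf binf E AE[OF j(1)]])
      then show ?thesis using y j by auto
    qed
  qed
qed auto

lemma shift_contra:
  assumes sm: "smono s k" "smono s' k" and k0: "0 < k"
    and ins: "\<And>i. i < k \<Longrightarrow> a < ereal (s i) \<and> ereal (s i) < b"
        "\<And>i. i < k \<Longrightarrow> a < ereal (s' i) \<and> ereal (s' i) < b"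
    and cm: "\<And>j. j < k \<Longrightarrow> cmin (DC (cell s k j)) (s j)" "\<And>j. j < k \<Longrightarrow> cmin (DC (cell s' k j)) (s' j)"
    and sh: "\<forall>i<k. s' i - s i = E" and E: "0 < E"
    and H: "(\<bar>a\<bar> \<noteq> \<infinity> \<or> \<bar>b\<bar> \<noteq> \<infinity>)
            \<or> (\<forall>t. 0 < t \<and> ereal t < b - a \<longrightarrow> infinite (Gs \<Psi> t ` {y. a < ereal y \<and> ereal y < b}))
            \<or> continuous_on UNIV \<Psi>"
  shows False
proof -
  have eS: "s' j - s j = E" if "j < k" for j using sh that by blast
  have step: "AE y in lborel. DC (cell s' k j) (y + (s' j - s j)) = (\<Psi> (s' j) / \<Psi> (s j)) * DC (cell s k j) y"
    "j = 0 \<Longrightarrow> s j < s' j \<Longrightarrow> a = -\<infinity>" "Suc j = k \<Longrightarrow> s j < s' j \<Longrightarrow> b = \<infinity>" if j: "j < k" for j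
  proof -
    have e0: "s j \<le> s' j" using eS[OF j] E by simp
    have L: "(s' (j-1) + s' j)/2 - (s (j-1) + s j)/2 \<le> s' j - s j" if "0 < j"
      using eS[of "j - 1"] eS[OF j] that j by (simp add: field_simps)
    have R: "(s' j + s' (Suc j))/2 - (s j + s (Suc j))/2 \<le> s' j - s j" if "Suc j < k"
      using eS[of "Suc j"] eS[OF j] that by (simp add: field_simps)
    show "AE y in lborel. DC (cell s' k j) (y + (s' j - s j)) = (\<Psi> (s' j) / \<Psi> (s j)) * DC (cell s k j) y"
      by (rule cs_ae[OF sm j ins cm(1)[OF j] cm(2)[OF j] e0 L R])
    show "j = 0 \<Longrightarrow> s j < s' j \<Longrightarrow> a = -\<infinity>"
      by (rule cs_a[OF sm j ins cm(1)[OF j] cm(2)[OF j] e0 L R])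
    show "Suc j = k \<Longrightarrow> s j < s' j \<Longrightarrow> b = \<infinity>"
      by (rule cs_b[OF sm j ins cm(1)[OF j] cm(2)[OF j] e0 L R])
  qed
  have ainf: "a = -\<infinity>" using step(2)[OF k0] eS[OF k0] E by simp
  have k1: "k - 1 < k" "Suc (k - 1) = k" using k0 by auto
  have binf: "b = \<infinity>" using step(3)[OF k1(1) k1(2)] eS[OF k1(1)] E by simp
  have Pp: "\<Psi> y > 0" for y using Psi_pos ainf binf by simp
  define \<kappa> where "\<kappa> j = \<Psi> (s' j) / \<Psi> (s j)" for j
  have AE: "AE y in lborel. y \<in> cell s k j \<longrightarrow> \<Psi> (y + E) = \<kappa> j * \<Psi> y" if j: "j < k" for j
    using step(1)[OF j]
  proof eventually_elim
    case (elim y)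
    show ?case
    proof
      assume yc: "y \<in> cell s k j"
      hence "y + E \<in> cell s' k j" using cell_shift[OF sh] by simp
      then show "\<Psi> (y + E) = \<kappa> j * \<Psi> y" using elim yc eS[OF j] by (simp add: DC_def \<kappa>_def)
    qed
  qed
  have fin: "finite (Gs \<Psi> E ` UNIV)" by (rule G_finite_image[OF ainf binf E sm(1) k0 AE])
  have UN: "{y. a < ereal y \<and> ereal y < b} = UNIV" using ainf binf by auto
  from H show False
  proof (elim disjE)
    assume "\<bar>a\<bar> \<noteq> \<infinity>" then show False using ainf by simp
  next
    assume "\<bar>b\<bar> \<noteq> \<infinity>" then show False using binf by simp
  next
    assume 2: "\<forall>t. 0 < t \<and> ereal t < b - a \<longrightarrow> infinite (Gs \<Psi> t ` {y. a < ereal y \<and> ereal y < b})"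
    have "infinite (Gs \<Psi> E ` UNIV)" using 2[rule_format, of E] E ainf binf UN by simp
    then show False using fin by simp
  next
    assume 3: "continuous_on UNIV \<Psi>"
    have c1: "continuous_on UNIV (\<lambda>y. \<Psi> (y + E))"
      by (rule continuous_on_compose2[OF 3]) (auto intro!: continuous_intros)
    have Pn: "\<forall>y\<in>UNIV. \<Psi> y \<noteq> 0" using Pp by (metis less_irrefl)
    have cG: "continuous_on UNIV (Gs \<Psi> E)" unfolding Gs_def
      by (rule continuous_on_divide[OF c1 3 Pn])
    have "connected (Gs \<Psi> E ` UNIV)" by (rule connected_continuous_image[OF cG connected_UNIV])
    then obtain c where c: "Gs \<Psi> E ` UNIV = {c}" using fin connected_finite_iff_sing by auto
    have per: "\<Psi> (y + E) = c * \<Psi> y" for y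
    proof -
      have "Gs \<Psi> E y = c" using c by auto
      then show ?thesis using Pp[of y] by (simp add: Gs_def field_simps)
    qed
    show False by (rule periodic_contra[OF 3 Pp E per Psi_int])
  qed
qed

end


context qset begin

lemma one_dir:
  assumes k0: "0 < k" and sm: "smono s k" "smono s' k"
    and ins: "\<And>i. i < k \<Longrightarrow> a < ereal (s i) \<and> ereal (s i) < b"
        "\<And>i. i < k \<Longrightarrow> a < ereal (s' i) \<and> ereal (s' i) < b"
    and cm: "\<And>j. j < k \<Longrightarrow> cmin (DC (cell s k j)) (s j)" "\<And>j. j < k \<Longrightarrow> cmin (DC (cell s' k j)) (s' j)"
    and d: "k = 1 \<Longrightarrow> s 0 \<le> s' 0" "2 \<le> k \<Longrightarrow> s 0 + s 1 \<le> s' 0 + s' 1"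
    and H: "(\<bar>a\<bar> \<noteq> \<infinity> \<or> \<bar>b\<bar> \<noteq> \<infinity>)
            \<or> (\<forall>t. 0 < t \<and> ereal t < b - a \<longrightarrow> infinite (Gs \<Psi> t ` {y. a < ereal y \<and> ereal y < b}))
            \<or> continuous_on UNIV \<Psi>"
  shows "\<forall>i<k. s' i = s i"
proof -
  define E where "E = s' 0 - s 0"
  have sh: "\<forall>i<k. s' i - s i = E"
  proof (cases "k = 1")
    case True then show ?thesis by (simp add: E_def)
  next
    case False
    hence k2: "2 \<le> k" using k0 by simp
    show ?thesis unfolding E_def by (rule chain_shift[OF k2 sm ins cm d(2)[OF k2]])
  qed
  have E0: "0 \<le> E"
  proof (cases "k = 1")
    case True then show ?thesis using d(1) by (simp add: E_def)
  next
    case False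
    hence k2: "2 \<le> k" using k0 by simp
    hence "s' 1 - s 1 = E" using sh by simp
    then show ?thesis using d(2)[OF k2] by (simp add: E_def)
  qed
  have "E = 0"
  proof (rule ccontr)
    assume "E \<noteq> 0"
    hence "0 < E" using E0 by simp
    then show False using shift_contra[OF sm k0 ins cm sh _ H] by blast
  qed
  then show ?thesis using sh by simp
qed

lemma opt_unique:
  assumes o1: "opt k V" and o2: "opt k W"
    and H: "(\<bar>a\<bar> \<noteq> \<infinity> \<or> \<bar>b\<bar> \<noteq> \<infinity>)
            \<or> (\<forall>t. 0 < t \<and> ereal t < b - a \<longrightarrow> infinite (Gs \<Psi> t ` {y. a < ereal y \<and> ereal y < b}))
            \<or> continuous_on UNIV \<Psi>"
  shows "V = W"
proof -
  have cV: "card V = k" and cW: "card W = k" using opt_card o1 o2 by auto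
  have fin: "finite V" "finite W" "V \<noteq> {}" using o1 o2 unfolding opt_def quant_def by auto
  have "0 < card V" using fin by (simp add: card_gt_0_iff)
  hence k0: "0 < k" using cV by simp
  define s where "s = enum V"
  define s' where "s' = enum W"
  have sm: "smono s k" "smono s' k" using enum_props(1)[OF fin(1)] enum_props(1)[OF fin(2)] cV cW
    unfolding s_def s'_def by simp_all
  have im: "s ` {..<k} = V" "s' ` {..<k} = W" using enum_props(2)[OF fin(1)] enum_props(2)[OF fin(2)] cV cW
    unfolding s_def s'_def by simp_all
  have ins: "\<And>i. i < k \<Longrightarrow> a < ereal (s i) \<and> ereal (s i) < b"
        "\<And>i. i < k \<Longrightarrow> a < ereal (s' i) \<and> ereal (s' i) < b"
    using opt_inside[OF o1] opt_inside[OF o2] cV cW unfolding s_def s'_def by auto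
  have cm: "\<And>j. j < k \<Longrightarrow> cmin (DC (cell s k j)) (s j)" "\<And>j. j < k \<Longrightarrow> cmin (DC (cell s' k j)) (s' j)"
    using opt_cmin[OF o1] opt_cmin[OF o2] cV cW unfolding s_def s'_def by auto
  have eq: "\<forall>i<k. s' i = s i"
  proof (cases "(k = 1 \<longrightarrow> s 0 \<le> s' 0) \<and> (2 \<le> k \<longrightarrow> s 0 + s 1 \<le> s' 0 + s' 1)")
    case True
    then show ?thesis using one_dir[OF k0 sm ins cm _ _ H] by blast
  next
    case False
    hence d: "k = 1 \<Longrightarrow> s' 0 \<le> s 0" "2 \<le> k \<Longrightarrow> s' 0 + s' 1 \<le> s 0 + s 1" by auto
    have "\<forall>i<k. s i = s' i"
      by (rule one_dir[OF k0 sm(2,1) ins(2,1) cm(2,1) d H])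
    then show ?thesis by simp
  qed
  have "s ` {..<k} = s' ` {..<k}" using eq by (intro image_cong) auto
  then show ?thesis using im by simp
qed

lemma fatou_infdist:
  assumes C: "\<And>n. C n \<noteq> {}" and lim: "(\<lambda>n. CS (C n)) \<longlonglongrightarrow> I"
    and \<theta>: "\<theta> \<in> borel_measurable borel" "\<And>y. 0 \<le> \<theta> y"
    and ev: "\<And>y \<epsilon>. 0 < \<epsilon> \<Longrightarrow> eventually (\<lambda>n. \<theta> y - \<epsilon> < infdist y (C n)) sequentially"
  shows "(\<integral>\<^sup>+ y. ennreal (\<theta> y powr p * \<Psi> y) \<partial>lborel) \<le> ennreal I"
proof -
  define m where "m n y = min (infdist y (C n)) (\<theta> y)" for n y
  have mlim: "(\<lambda>n. m n y) \<longlonglongrightarrow> \<theta> y" for y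
    unfolding tendsto_iff
  proof (intro allI impI)
    fix \<epsilon> :: real assume e: "0 < \<epsilon>"
    show "eventually (\<lambda>n. dist (m n y) (\<theta> y) < \<epsilon>) sequentially"
      using ev[OF e, of y]
    proof eventually_elim
      case (elim n)
      then show ?case using e by (auto simp: m_def dist_real_def min_def)
    qed
  qed
  have m0: "0 \<le> m n y" for n y using \<theta>(2) by (simp add: m_def infdist_nonneg)
  have p0: "0 < p" using p1 by simp
  have hlim: "(\<lambda>n. ennreal (m n y powr p * \<Psi> y)) \<longlonglongrightarrow> ennreal (\<theta> y powr p * \<Psi> y)" for y
    by (intro tendsto_ennrealI tendsto_mult_right tendsto_powr' mlim tendsto_const) (use p0 m0 in auto)
  have meas: "(\<lambda>y. ennreal (m n y powr p * \<Psi> y)) \<in> borel_measurable lborel" for n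
    unfolding m_def using \<theta>(1) by measurable
  have "(\<integral>\<^sup>+ y. ennreal (\<theta> y powr p * \<Psi> y) \<partial>lborel)
      = (\<integral>\<^sup>+ y. liminf (\<lambda>n. ennreal (m n y powr p * \<Psi> y)) \<partial>lborel)"
    using lim_imp_Liminf[OF _ hlim] by simp
  also have "\<dots> \<le> liminf (\<lambda>n. \<integral>\<^sup>+ y. ennreal (m n y powr p * \<Psi> y) \<partial>lborel)"
    by (rule nn_integral_liminf[OF meas])
  also have "\<dots> \<le> liminf (\<lambda>n. ennreal (CS (C n)))"
  proof (rule Liminf_mono, rule always_eventually, rule allI)
    fix n
    obtain v where v: "v \<in> C n" using C by blast
    have "(\<integral>\<^sup>+ y. ennreal (m n y powr p * \<Psi> y) \<partial>lborel) \<le> (\<integral>\<^sup>+ y. ennreal (infdist y (C n) powr p * \<Psi> y) \<partial>lborel)"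
    proof (rule Nonnegative_Lebesgue_Integration.nn_integral_mono)
      fix y
      have "m n y powr p \<le> infdist y (C n) powr p" using p1 m0 by (intro powr_mono2) (auto simp: m_def)
      hence "m n y powr p * \<Psi> y \<le> infdist y (C n) powr p * \<Psi> y" using Psi_nonneg by (intro mult_right_mono) auto
      then show "ennreal (m n y powr p * \<Psi> y) \<le> ennreal (infdist y (C n) powr p * \<Psi> y)" by (rule ennreal_leI)
    qed
    also have "\<dots> = ennreal (CS (C n))" unfolding CS_def
      by (rule nn_integral_eq_integral[OF CS_integrable[OF v]]) (simp add: Psi_nonneg)
    finally show "(\<integral>\<^sup>+ y. ennreal (m n y powr p * \<Psi> y) \<partial>lborel) \<le> ennreal (CS (C n))" .
  qed
  also have "\<dots> = ennreal I" using lim_imp_Liminf[OF _ tendsto_ennrealI[OF lim]] by simp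
  finally show ?thesis .
qed

end


lemma multi_subseq:
  fixes X :: "nat \<Rightarrow> nat \<Rightarrow> ereal"
  shows "\<exists>r. strict_mono r \<and> (\<forall>i<k. \<exists>l. (\<lambda>n. X (r n) i) \<longlonglongrightarrow> l)"
proof (induction k)
  case 0
  show ?case by (rule exI[of _ id]) (simp add: strict_mono_def)
next
  case (Suc k)
  then obtain r where r: "strict_mono r" "\<forall>i<k. \<exists>l. (\<lambda>n. X (r n) i) \<longlonglongrightarrow> l" by blast
  obtain f where f: "strict_mono f" "monoseq (\<lambda>n. X (r (f n)) k)"
    using seq_monosub[of "\<lambda>n. X (r n) k"] by blast
  have "\<exists>l. (\<lambda>n. X (r (f n)) k) \<longlonglongrightarrow> l"
    using f(2) unfolding monoseq_iff using LIMSEQ_SUP LIMSEQ_INF by blast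
  moreover have "\<exists>l. (\<lambda>n. X (r (f n)) i) \<longlonglongrightarrow> l" if ik: "i < k" for i
  proof -
    obtain l where "(\<lambda>n. X (r n) i) \<longlonglongrightarrow> l" using r(2) ik by blast
    from LIMSEQ_subseq_LIMSEQ[OF this f(1)] show ?thesis by (auto simp: comp_def)
  qed
  ultimately have "\<forall>i<Suc k. \<exists>l. (\<lambda>n. X ((r \<circ> f) n) i) \<longlonglongrightarrow> l"
    by (auto simp: less_Suc_eq)
  moreover have "strict_mono (r \<circ> f)" using r(1) f(1) by (rule strict_mono_o)
  ultimately show ?case by blast
qed

context qset begin

lemma CS_nonneg: "0 \<le> CS V" unfolding CS_def by (intro integral_nonneg_AE AE_I2) (simp add: Psi_nonneg)

lemma Psi_int_pos: "0 < (\<integral>y. \<Psi> y \<partial>lborel)"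
proof -
  obtain \<alpha> \<beta> where ab': "a < ereal \<alpha>" "\<alpha> < \<beta>" "ereal \<beta> < b" using ereal_two_between[OF ab] by blast
  have "(\<integral>y. \<Psi> y \<partial>lborel) \<noteq> 0"
  proof
    assume "(\<integral>y. \<Psi> y \<partial>lborel) = 0"
    hence "AE y in lborel. \<Psi> y = 0" using Psi_int Psi_nonneg by (subst (asm) integral_nonneg_eq_0_iff_AE) auto
    then show False
    proof (rule AE_Ioo_contra[OF _ ab'(2)])
      fix y assume y: "\<alpha> < y" "y < \<beta>"
      have y1: "ereal \<alpha> < ereal y" and y2: "ereal y < ereal \<beta>" using y by auto
      have "a < ereal y" "ereal y < b" using less_trans[OF ab'(1) y1] less_trans[OF y2 ab'(3)] by auto
      then show "\<not> \<Psi> y = 0" using Psi_pos[of y] by simp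
    qed
  qed
  moreover have "0 \<le> (\<integral>y. \<Psi> y \<partial>lborel)" by (intro integral_nonneg_AE AE_I2) (simp add: Psi_nonneg)
  ultimately show ?thesis by simp
qed

lemma quant_vector: assumes q: "quant k W" shows "\<exists>w. w ` {..<k} = W"
proof -
  have fin: "finite W" and ne: "W \<noteq> {}" and kW: "card W \<le> k" using q unfolding quant_def by auto
  define n where "n = card W"
  have n0: "0 < n" using fin ne unfolding n_def by (simp add: card_gt_0_iff)
  have im: "enum W ` {..<n} = W" using enum_props(2)[OF fin] unfolding n_def .
  define w where "w i = enum W (min i (n - 1))" for i
  have "w ` {..<k} = enum W ` {..<n}"
  proof
    show "w ` {..<k} \<subseteq> enum W ` {..<n}" using n0 by (auto simp: w_def)
    show "enum W ` {..<n} \<subseteq> w ` {..<k}"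
    proof
      fix x assume "x \<in> enum W ` {..<n}"
      then obtain j where j: "j < n" "x = enum W j" by auto
      have "w j = x" using j by (simp add: w_def)
      moreover have "j < k" using j kW unfolding n_def by simp
      ultimately show "x \<in> w ` {..<k}" by blast
    qed
  qed
  then have "w ` {..<k} = W" using im by simp
  then show ?thesis by (intro exI[where x=w])
qed

lemma infdist_image_attained: fixes k :: nat assumes "0 < k" shows "\<exists>i<k. infdist y (c ` {..<k}) = \<bar>y - c i\<bar>"
proof -
  have cl: "closed (c ` {..<k})" by (intro finite_imp_closed) auto
  have ne: "c ` {..<k} \<noteq> {}" using assms by auto
  obtain x where "x \<in> c ` {..<k}" "infdist y (c ` {..<k}) = dist y x"
    using infdist_attains_inf[OF cl ne, of y] by blast
  then show ?thesis by (auto simp: dist_real_def)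
qed

lemma ev_infdist: fixes k :: nat assumes k0: "0 < k" and ev: "eventually (\<lambda>n. \<forall>i<k. t < \<bar>y - c n i\<bar>) F"
  shows "eventually (\<lambda>n. t < infdist y (c n ` {..<k})) F"
  using ev
proof eventually_elim
  case (elim n)
  obtain i where "i < k" "infdist y (c n ` {..<k}) = \<bar>y - c n i\<bar>" using infdist_image_attained[OF k0] by blast
  then show ?case using elim by simp
qed

end


context qset begin

lemma opt_exists: fixes k :: nat assumes k0: "0 < k" shows "\<exists>V. opt k V"
proof -
  define F where "F c = CS (c ` {..<k})" for c :: "nat \<Rightarrow> real"
  define I where "I = (INF c. F c)"
  have bdd: "bdd_below (range F)" unfolding bdd_below_def F_def using CS_nonneg by blast
  have I0: "0 \<le> I" unfolding I_def F_def by (rule cINF_greatest) (auto simp: CS_nonneg)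
  have Ile: "I \<le> F c" for c unfolding I_def by (rule cINF_lower[OF bdd]) simp
  have "\<exists>c. F c < I + 1 / real (Suc n)" for n
  proof -
    have "I < I + 1 / real (Suc n)" by simp
    then show ?thesis unfolding I_def using cINF_less_iff[OF UNIV_not_empty bdd] by blast
  qed
  then obtain cs where cs: "\<And>n. F (cs n) < I + 1 / real (Suc n)" by metis
  have Flim: "(\<lambda>n. F (cs n)) \<longlonglongrightarrow> I"
  proof (rule tendsto_sandwich[of "\<lambda>n. I" _ _ "\<lambda>n. I + 1 / real (Suc n)"])
    show "eventually (\<lambda>n. I \<le> F (cs n)) sequentially" using Ile by simp
    show "eventually (\<lambda>n. F (cs n) \<le> I + 1 / real (Suc n)) sequentially" using cs by (simp add: less_imp_le)
    show "(\<lambda>n. I) \<longlonglongrightarrow> I" by simp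
    have "(\<lambda>n. I + inverse (real (Suc n))) \<longlonglongrightarrow> I + 0"
      by (intro tendsto_add tendsto_const LIMSEQ_inverse_real_of_nat)
    then show "(\<lambda>n. I + 1 / real (Suc n)) \<longlonglongrightarrow> I" by (simp add: inverse_eq_divide)
  qed
  obtain r where r: "strict_mono r" "\<forall>i<k. \<exists>l. (\<lambda>n. ereal (cs (r n) i)) \<longlonglongrightarrow> l"
    using multi_subseq[where X="\<lambda>n i. ereal (cs n i)" and k=k] by blast
  define c where "c n = cs (r n)" for n
  have Fc: "(\<lambda>n. CS (c n ` {..<k})) \<longlonglongrightarrow> I"
    using LIMSEQ_subseq_LIMSEQ[OF Flim r(1)] by (simp add: comp_def c_def F_def)
  obtain L where L: "\<And>i. i < k \<Longrightarrow> (\<lambda>n. ereal (c n i)) \<longlonglongrightarrow> L i"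
    using r(2) unfolding c_def by metis
  define J where "J = {i. i < k \<and> \<bar>L i\<bar> \<noteq> \<infinity>}"
  have Lfin: "(\<lambda>n. c n i) \<longlonglongrightarrow> real_of_ereal (L i)" if i: "i \<in> J" for i
  proof -
    have Li: "L i = ereal (real_of_ereal (L i))" using i unfolding J_def by (cases "L i") auto
    have ik: "i < k" using i unfolding J_def by simp
    have "(\<lambda>n. ereal (c n i)) \<longlonglongrightarrow> ereal (real_of_ereal (L i))" using L[OF ik] by (simp only: Li[symmetric])
    then show ?thesis by (simp only: lim_ereal)
  qed
  have Linf: "eventually (\<lambda>n. M < \<bar>y - c n i\<bar>) sequentially" if i: "i < k" "i \<notin> J" for i M y
  proof -
    have "L i = \<infinity> \<or> L i = -\<infinity>" using i unfolding J_def by (cases "L i") auto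
    then show ?thesis
    proof
      assume Li: "L i = \<infinity>"
      have "eventually (\<lambda>n. ereal (M + \<bar>y\<bar>) < ereal (c n i)) sequentially"
        using order_tendstoD(1)[OF L[OF i(1)], of "ereal (M + \<bar>y\<bar>)"] Li by simp
      then show ?thesis by eventually_elim auto
    next
      assume Li: "L i = -\<infinity>"
      have "eventually (\<lambda>n. ereal (c n i) < ereal (- (M + \<bar>y\<bar>))) sequentially"
        using order_tendstoD(2)[OF L[OF i(1)], of "ereal (- (M + \<bar>y\<bar>))"] Li by simp
      then show ?thesis by eventually_elim auto
    qed
  qed
  have Cne: "c n ` {..<k} \<noteq> {}" for n using k0 by auto
  show ?thesis
  proof (cases "J = {}")
    case True
    have bound: "M powr p * (\<integral>y. \<Psi> y \<partial>lborel) \<le> I" if M: "0 \<le> M" for M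
    proof -
      have "(\<integral>\<^sup>+ y. ennreal (M powr p * \<Psi> y) \<partial>lborel) \<le> ennreal I"
      proof (rule fatou_infdist[OF Cne Fc])
        show "(\<lambda>y. M) \<in> borel_measurable borel" by simp
        show "0 \<le> M" by (rule M)
        fix y :: real and \<epsilon> :: real assume "0 < \<epsilon>"
        have "eventually (\<lambda>n. \<forall>i\<in>{..<k}. M - \<epsilon> < \<bar>y - c n i\<bar>) sequentially"
          using True by (intro eventually_ball_finite) (auto intro: Linf)
        hence "eventually (\<lambda>n. \<forall>i<k. M - \<epsilon> < \<bar>y - c n i\<bar>) sequentially" by (auto elim: eventually_mono)
        then show "eventually (\<lambda>n. M - \<epsilon> < infdist y (c n ` {..<k})) sequentially"
          by (rule ev_infdist[OF k0])
      qed
      also have "(\<integral>\<^sup>+ y. ennreal (M powr p * \<Psi> y) \<partial>lborel) = ennreal (\<integral>y. M powr p * \<Psi> y \<partial>lborel)"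
        by (rule nn_integral_eq_integral) (auto intro: Psi_int simp: Psi_nonneg)
      finally have "(\<integral>y. M powr p * \<Psi> y \<partial>lborel) \<le> I" using I0 by (simp add: ennreal_le_iff)
      then show ?thesis by simp
    qed
    define M where "M = max 1 ((I + 1) / (\<integral>y. \<Psi> y \<partial>lborel))"
    have ip: "0 < (\<integral>y. \<Psi> y \<partial>lborel)" by (rule Psi_int_pos)
    have M1: "1 \<le> M" unfolding M_def by simp
    have "M powr 1 \<le> M powr p" using M1 p1 by (intro powr_mono) auto
    hence "M \<le> M powr p" using M1 by simp
    moreover have "(I + 1) / (\<integral>y. \<Psi> y \<partial>lborel) \<le> M" unfolding M_def by simp
    ultimately have "(I + 1) / (\<integral>y. \<Psi> y \<partial>lborel) \<le> M powr p" by simp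
    hence "I + 1 \<le> M powr p * (\<integral>y. \<Psi> y \<partial>lborel)" using ip by (simp add: divide_le_eq)
    moreover have "M powr p * (\<integral>y. \<Psi> y \<partial>lborel) \<le> I" using bound M1 by simp
    ultimately show ?thesis by simp
  next
    case False
    then obtain i0 where i0: "i0 \<in> J" by blast
    define cstar where "cstar i = real_of_ereal (L (if i \<in> J then i else i0))" for i
    define Cs where "Cs = cstar ` {..<k}"
    have Csne: "Cs \<noteq> {}" using k0 by (auto simp: Cs_def)
    have "(\<integral>\<^sup>+ y. ennreal (infdist y Cs powr p * \<Psi> y) \<partial>lborel) \<le> ennreal I"
    proof (rule fatou_infdist[OF Cne Fc])
      show "(\<lambda>y. infdist y Cs) \<in> borel_measurable borel" by simp
      show "0 \<le> infdist y Cs" for y by (rule infdist_nonneg)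
      fix y :: real and \<epsilon> :: real assume e: "0 < \<epsilon>"
      have "eventually (\<lambda>n. \<forall>i\<in>{..<k}. infdist y Cs - \<epsilon> < \<bar>y - c n i\<bar>) sequentially"
      proof (intro eventually_ball_finite ballI)
        fix i assume "i \<in> {..<k}"
        hence ik: "i < k" by simp
        show "eventually (\<lambda>n. infdist y Cs - \<epsilon> < \<bar>y - c n i\<bar>) sequentially"
        proof (cases "i \<in> J")
          case True
          have lim: "(\<lambda>n. \<bar>y - c n i\<bar>) \<longlonglongrightarrow> \<bar>y - cstar i\<bar>"
            using Lfin[OF True] True unfolding cstar_def by (intro tendsto_intros) auto
          have "cstar i \<in> Cs" using ik by (simp add: Cs_def)
          hence "infdist y Cs \<le> \<bar>y - cstar i\<bar>" using infdist_le[of "cstar i" Cs y] by (simp add: dist_real_def)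
          hence "infdist y Cs - \<epsilon> < \<bar>y - cstar i\<bar>" using e by simp
          then show ?thesis by (rule order_tendstoD(1)[OF lim])
        next
          case False
          then show ?thesis using Linf[OF ik False] by blast
        qed
      qed simp
      hence "eventually (\<lambda>n. \<forall>i<k. infdist y Cs - \<epsilon> < \<bar>y - c n i\<bar>) sequentially" by (auto elim: eventually_mono)
      then show "eventually (\<lambda>n. infdist y Cs - \<epsilon> < infdist y (c n ` {..<k})) sequentially"
        by (rule ev_infdist[OF k0])
    qed
    also have "(\<integral>\<^sup>+ y. ennreal (infdist y Cs powr p * \<Psi> y) \<partial>lborel) = ennreal (CS Cs)"
    proof -
      obtain v where v: "v \<in> Cs" using Csne by blast
      show ?thesis unfolding CS_def
        by (intro nn_integral_eq_integral CS_integrable[OF v]) (auto simp: Psi_nonneg)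
    qed
    finally have CsI: "CS Cs \<le> I" using I0 by (simp add: ennreal_le_iff)
    have "opt k Cs" unfolding opt_def
    proof (intro conjI allI impI)
      show "quant k Cs" unfolding quant_def Cs_def using k0 by (auto intro: order_trans[OF card_image_le])
      fix W assume "quant k W"
      then obtain w where w: "w ` {..<k} = W" using quant_vector by blast
      have "CS Cs \<le> F w" using CsI Ile[of w] by simp
      then show "CS Cs \<le> CS W" using w by (simp add: F_def)
    qed
    then show ?thesis by blast
  qed
qed

end


lemma transfer:
  fixes M :: "'a measure" and f :: "'a \<Rightarrow> real" and \<Psi> q :: "real \<Rightarrow> real"
  assumes fm: "f \<in> borel_measurable M" and dens: "distr M lborel f = density lborel (\<lambda>y. ennreal (\<Psi> y))"
    and Pm: "\<Psi> \<in> borel_measurable borel" and Pn: "\<And>y. 0 \<le> \<Psi> y" and qm: "q \<in> borel_measurable borel"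
  shows "(\<integral>x. q (f x) \<partial>M) = (\<integral>y. \<Psi> y * q y \<partial>lborel)"
    and "integrable M (\<lambda>x. q (f x)) \<longleftrightarrow> integrable lborel (\<lambda>y. \<Psi> y * q y)"
proof -
  have fm': "f \<in> measurable M lborel" using fm by simp
  have qm': "q \<in> borel_measurable lborel" using qm by simp
  have "(\<integral>x. q (f x) \<partial>M) = integral\<^sup>L (distr M lborel f) q" by (rule integral_distr[OF fm' qm', symmetric])
  also have "\<dots> = integral\<^sup>L (density lborel (\<lambda>y. ennreal (\<Psi> y))) q" by (simp add: dens)
  also have "\<dots> = (\<integral>y. \<Psi> y * q y \<partial>lborel)" using Pm Pn qm' by (subst integral_density) auto
  finally show "(\<integral>x. q (f x) \<partial>M) = (\<integral>y. \<Psi> y * q y \<partial>lborel)" .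
  have "integrable M (\<lambda>x. q (f x)) \<longleftrightarrow> integrable (distr M lborel f) q" by (rule integrable_distr_eq[OF fm' qm', symmetric])
  also have "\<dots> \<longleftrightarrow> integrable (density lborel (\<lambda>y. ennreal (\<Psi> y))) q" by (simp add: dens)
  also have "\<dots> \<longleftrightarrow> integrable lborel (\<lambda>y. \<Psi> y * q y)" using Pm Pn qm' by (subst integrable_density) auto
  finally show "integrable M (\<lambda>x. q (f x)) \<longleftrightarrow> integrable lborel (\<lambda>y. \<Psi> y * q y)" .
qed

lemma transfer_emeasure:
  fixes M :: "'a measure" and f :: "'a \<Rightarrow> real" and \<Psi> :: "real \<Rightarrow> real"
  assumes fm: "f \<in> borel_measurable M" and dens: "distr M lborel f = density lborel (\<lambda>y. ennreal (\<Psi> y))"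
    and Pm: "\<Psi> \<in> borel_measurable borel" and A: "A \<in> sets borel"
  shows "emeasure M (f -` A \<inter> space M) = (\<integral>\<^sup>+ y. ennreal (\<Psi> y) * indicator A y \<partial>lborel)"
proof -
  have fm': "f \<in> measurable M lborel" using fm by simp
  have "emeasure M (f -` A \<inter> space M) = emeasure (distr M lborel f) A" using A by (simp add: emeasure_distr[OF fm'])
  also have "\<dots> = emeasure (density lborel (\<lambda>y. ennreal (\<Psi> y))) A" by (simp add: dens)
  also have "\<dots> = (\<integral>\<^sup>+ y. ennreal (\<Psi> y) * indicator A y \<partial>lborel)" using A Pm by (subst emeasure_density) auto
  finally show ?thesis .
qed

lemma Sup_range_ereal: "Sup (range ereal) = \<infinity>"
proof -
  have "\<forall>x<top. \<exists>i\<in>range ereal. x < i"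
  proof (intro allI impI)
    fix x :: ereal assume "x < top"
    hence "x < \<infinity>" by (simp add: top_ereal_def)
    then obtain r where "x < ereal r" using ereal_dense2[of x \<infinity>] by auto
    then show "\<exists>i\<in>range ereal. x < i" by blast
  qed
  then show ?thesis by (simp only: Sup_eq_top_iff top_ereal_def[symmetric])
qed

lemma Inf_range_ereal: "Inf (range ereal) = -\<infinity>"
proof -
  have "\<forall>x>bot. \<exists>i\<in>range ereal. i < x"
  proof (intro allI impI)
    fix x :: ereal assume "bot < x"
    hence "-\<infinity> < x" by (simp add: bot_ereal_def)
    then obtain r where "ereal r < x" using ereal_dense2[of "-\<infinity>" x] by auto
    then show "\<exists>i\<in>range ereal. i < x" by blast
  qed
  then show ?thesis by (simp only: Inf_eq_bot_iff bot_ereal_def[symmetric])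
qed

lemma ab_strict:
  fixes M :: "'a measure" and f :: "'a \<Rightarrow> real" and \<Psi> :: "real \<Rightarrow> real"
  assumes fin: "finite_measure M" and fm: "f \<in> borel_measurable M"
    and dens: "distr M lborel f = density lborel (\<lambda>y. ennreal (\<Psi> y))"
    and Pm: "\<Psi> \<in> borel_measurable borel"
    and zero: "\<And>y. \<not> (lo_end M f < ereal y \<and> ereal y < hi_end M f) \<Longrightarrow> \<Psi> y = 0"
    and le: "lo_end M f \<le> hi_end M f"
  shows "lo_end M f < hi_end M f"
proof (rule ccontr)
  assume "\<not> ?thesis"
  hence eq: "lo_end M f = hi_end M f" using le by simp
  have z: "\<Psi> y = 0" for y
  proof (rule zero)
    show "\<not> (lo_end M f < ereal y \<and> ereal y < hi_end M f)" using eq by (auto dest: less_trans)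
  qed
  have "emeasure M (f -` UNIV \<inter> space M) = (\<integral>\<^sup>+ y. ennreal (\<Psi> y) * indicator UNIV y \<partial>lborel)"
    by (rule transfer_emeasure[OF fm dens Pm]) simp
  also have "\<dots> = 0" by (simp add: z)
  finally have "emeasure M (space M) = 0" by simp
  hence mz: "measure M (space M) = 0" by (simp add: measure_def)
  have cdf0: "cdf_of M f z = 0" for z
  proof -
    have s: "{\<omega> \<in> space M. f \<omega> \<le> z} \<in> sets M" using fm by measurable
    have "cdf_of M f z \<le> measure M (space M)" unfolding cdf_of_def
      by (rule finite_measure.finite_measure_mono[OF fin _ sets.top]) auto
    moreover have "0 \<le> cdf_of M f z" unfolding cdf_of_def by simp
    ultimately show ?thesis using mz by simp
  qed
  have "lo_end M f = \<infinity>" unfolding lo_end_def using cdf0 Sup_range_ereal by simp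
  moreover have "hi_end M f = -\<infinity>" unfolding hi_end_def using cdf0 mz Inf_range_ereal by simp
  ultimately show False using le by simp
qed

lemma Gpk_struct:
  assumes h: "h \<in> Gpk M k" and ne: "space M \<noteq> {}"
  shows "\<exists>W. finite W \<and> W \<noteq> {} \<and> card W \<le> k \<and> (\<forall>x\<in>space M. h x \<in> W) \<and> h \<in> borel_measurable M"
proof -
  obtain l A a where l: "l \<le> k" and A: "\<forall>i<l. A i \<in> sets M" and dis: "disjoint_family_on A {..<l}"
    and un: "(\<Union>i<l. A i) = space M" and hx: "\<forall>x\<in>space M. h x = (\<Sum>i<l. (a i :: real) * indicator (A i) x)"
    using h unfolding Gpk_def by blast
  define W where "W = a ` {..<l}"
  have val: "h x \<in> W" if x: "x \<in> space M" for x
  proof -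
    obtain j where j: "j < l" "x \<in> A j" using x un by blast
    have "(\<Sum>i<l. a i * indicator (A i) x) = (\<Sum>i<l. if i = j then a i else 0)"
    proof (rule sum.cong)
      fix i assume "i \<in> {..<l}"
      show "a i * indicator (A i) x = (if i = j then a i else 0)"
      proof (cases "i = j")
        case False
        hence "A i \<inter> A j = {}" using dis \<open>i \<in> {..<l}\<close> j(1) unfolding disjoint_family_on_def by auto
        then show ?thesis using j False by (auto simp: indicator_def)
      qed (use j in simp)
    qed simp
    also have "\<dots> = a j" using j by (simp add: sum.delta)
    finally show ?thesis using hx x j unfolding W_def by auto
  qed
  have "W \<noteq> {}" using ne val by blast
  moreover have "card W \<le> k" unfolding W_def using card_image_le[of "{..<l}" a] l by simp
  moreover have "h \<in> borel_measurable M"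
  proof -
    have "(\<lambda>x. \<Sum>i<l. a i * indicator (A i) x) \<in> borel_measurable M"
    proof (intro borel_measurable_sum borel_measurable_times borel_measurable_const)
      fix i assume "i \<in> {..<l}"
      then show "indicator (A i) \<in> borel_measurable M" using A by (intro borel_measurable_indicator) auto
    qed
    then show ?thesis using hx by (subst measurable_cong[where g="\<lambda>x. \<Sum>i<l. a i * indicator (A i) x"]) auto
  qed
  ultimately show ?thesis using val unfolding W_def by blast
qed

lemma int_diff:
  assumes fin: "finite_measure M" and p: "0 \<le> p" and f: "in_Lp M p f" and hm: "h \<in> borel_measurable M"
    and B: "\<And>x. x \<in> space M \<Longrightarrow> \<bar>h x\<bar> \<le> B"
  shows "integrable M (\<lambda>x. \<bar>f x - h x\<bar> powr p)"
proof (rule Bochner_Integration.integrable_bound)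
  have fm: "f \<in> borel_measurable M" and fi: "integrable M (\<lambda>x. \<bar>f x\<bar> powr p)" using f by (auto simp: in_Lp_def)
  show "integrable M (\<lambda>x. 2 powr p * (\<bar>f x\<bar> powr p + \<bar>B\<bar> powr p))"
    using fi finite_measure.integrable_const[OF fin] by (intro integrable_mult_right Bochner_Integration.integrable_add) auto
  show "(\<lambda>x. \<bar>f x - h x\<bar> powr p) \<in> borel_measurable M" using fm hm by measurable
  show "AE x in M. norm (\<bar>f x - h x\<bar> powr p) \<le> norm (2 powr p * (\<bar>f x\<bar> powr p + \<bar>B\<bar> powr p))"
  proof (rule AE_I2)
    fix x assume x: "x \<in> space M"
    have "\<bar>f x - h x\<bar> \<le> \<bar>f x\<bar> + \<bar>B\<bar>" using B[OF x] by linarith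
    hence "\<bar>f x - h x\<bar> powr p \<le> (\<bar>f x\<bar> + \<bar>B\<bar>) powr p" using p by (intro powr_mono2) auto
    also have "\<dots> \<le> 2 powr p * (\<bar>f x\<bar> powr p + \<bar>B\<bar> powr p)" using p by (intro powr_sum_le) auto
    finally show "norm (\<bar>f x - h x\<bar> powr p) \<le> norm (2 powr p * (\<bar>f x\<bar> powr p + \<bar>B\<bar> powr p))" by simp
  qed
qed


lemma powr_cancel: fixes x y q :: real
  assumes "0 \<le> x" "0 \<le> y" "0 < q" "x powr q = y powr q" shows "x = y"
proof (rule ccontr)
  assume "x \<noteq> y"
  then consider "x < y" | "y < x" by linarith
  then show False
  proof cases
    case 1 then have "x powr q < y powr q" using assms by (intro powr_less_mono2) auto
    then show False using assms by simp
  next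
    case 2 then have "y powr q < x powr q" using assms by (intro powr_less_mono2) auto
    then show False using assms by simp
  qed
qed

theorem theorem2p8:
  fixes M :: "'a measure" and p :: real and f :: "'a \<Rightarrow> real" and \<Psi> :: "real \<Rightarrow> real"
  defines "a \<equiv> lo_end M f" and "b \<equiv> hi_end M f"
  assumes fin: "finite_measure M"
    and p: "1 \<le> p"
    and fLp: "in_Lp M p f"
    and ab: "a \<le> b"
    and \<Psi>_meas: "\<Psi> \<in> borel_measurable borel"
    and density: "distr M lborel f = density lborel (\<lambda>y. ennreal (\<Psi> y))"
    and \<Psi>_pos: "\<And>y. a < ereal y \<Longrightarrow> ereal y < b \<Longrightarrow> \<Psi> y > 0"
    and \<Psi>_zero: "\<And>y. \<not> (a < ereal y \<and> ereal y < b) \<Longrightarrow> \<Psi> y = 0"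
    and G_mono: "\<And>s y z. 0 < s \<Longrightarrow> ereal s < b - a \<Longrightarrow> a < ereal y \<Longrightarrow> y \<le> z \<Longrightarrow>
                   ereal z < b \<Longrightarrow> Gs \<Psi> s z \<le> Gs \<Psi> s y"
    and H: "(\<bar>a\<bar> \<noteq> \<infinity> \<or> \<bar>b\<bar> \<noteq> \<infinity>)
            \<or> (\<forall>s. 0 < s \<and> ereal s < b - a \<longrightarrow> infinite (Gs \<Psi> s ` {y. a < ereal y \<and> ereal y < b}))
            \<or> continuous_on UNIV \<Psi>"
  shows "\<forall>k::nat. k \<ge> 1 \<longrightarrow>
           (\<exists>g\<in>Gpk M k. (\<forall>h\<in>Gpk M k. Lp_norm M p (\<lambda>x. f x - g x) \<le> Lp_norm M p (\<lambda>x. f x - h x))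
              \<and> (\<forall>h\<in>Gpk M k. Lp_norm M p (\<lambda>x. f x - h x) = Lp_norm M p (\<lambda>x. f x - g x)
                     \<longrightarrow> (AE x in M. h x = g x)))"
proof -
  have fm[measurable]: "f \<in> borel_measurable M" using fLp by (simp add: in_Lp_def)
  have Pn: "0 \<le> \<Psi> y" for y
  proof (cases "a < ereal y \<and> ereal y < b")
    case True then show ?thesis using \<Psi>_pos[of y] by simp
  next
    case False then show ?thesis using \<Psi>_zero[of y] by simp
  qed
  have zero': "\<And>y. \<not> (lo_end M f < ereal y \<and> ereal y < hi_end M f) \<Longrightarrow> \<Psi> y = 0"
    using \<Psi>_zero unfolding a_def b_def .
  have ab': "a < b" using ab_strict[OF fin fm density \<Psi>_meas zero'] ab unfolding a_def b_def by simp
  have Pint: "integrable lborel \<Psi>"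
  proof -
    have "integrable M (\<lambda>x. (\<lambda>y. 1::real) (f x))" using finite_measure.integrable_const[OF fin, of "1::real"] by simp
    then show ?thesis using transfer(2)[OF fm density \<Psi>_meas Pn, of "\<lambda>y. 1"] by simp
  qed
  have Pmom: "integrable lborel (\<lambda>y. \<bar>y\<bar> powr p * \<Psi> y)"
  proof -
    have "integrable M (\<lambda>x. (\<lambda>y. \<bar>y\<bar> powr p) (f x))" using fLp by (simp add: in_Lp_def)
    then have "integrable lborel (\<lambda>y. \<Psi> y * \<bar>y\<bar> powr p)"
      using transfer(2)[OF fm density \<Psi>_meas Pn, of "\<lambda>y. \<bar>y\<bar> powr p"] by simp
    then show ?thesis by (simp add: mult.commute)
  qed
  interpret Q: qset p \<Psi> a b
  proof (unfold_locales)
    show "1 \<le> p" by (rule p)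
  qed (use \<Psi>_meas \<Psi>_pos \<Psi>_zero Pint Pmom G_mono ab' in auto)
  have spne: "space M \<noteq> {}"
  proof
    assume sp: "space M = {}"
    have "emeasure M (f -` UNIV \<inter> space M) = (\<integral>\<^sup>+ y. ennreal (\<Psi> y) * indicator UNIV y \<partial>lborel)"
      by (rule transfer_emeasure[OF fm density \<Psi>_meas]) simp
    also have "\<dots> = (\<integral>\<^sup>+ y. ennreal (\<Psi> y) \<partial>lborel)" by simp
    also have "\<dots> = ennreal (\<integral>y. \<Psi> y \<partial>lborel)" by (rule nn_integral_eq_integral[OF Pint]) (simp add: Pn)
    finally have "ennreal (\<integral>y. \<Psi> y \<partial>lborel) = 0" using sp by simp
    then show False using Q.Psi_int_pos by simp
  qed
  define Dc where "Dc \<phi> = (\<integral>x. \<bar>f x - \<phi> x\<bar> powr p \<partial>M)" for \<phi>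
  have LpD: "Lp_norm M p (\<lambda>x. f x - \<phi> x) = Dc \<phi> powr (1 / p)" for \<phi> by (simp add: Lp_norm_def Dc_def)
  have Dc0: "0 \<le> Dc \<phi>" for \<phi> unfolding Dc_def by (intro integral_nonneg_AE AE_I2) simp
  have CS_tr: "(\<integral>x. infdist (f x) W powr p \<partial>M) = Q.CS W" for W
    using transfer(1)[OF fm density \<Psi>_meas Pn, of "\<lambda>y. infdist y W powr p"] by (simp add: Q.CS_def mult.commute)
  show ?thesis
  proof (intro allI impI)
    fix k :: nat assume k1: "k \<ge> 1"
    hence k0: "0 < k" by simp
    obtain V where oV: "Q.opt k V" using Q.opt_exists[OF k0] by blast
    have cV: "card V = k" by (rule Q.opt_card[OF oV])
    have finV: "finite V" using oV by (simp add: Q.opt_def Q.quant_def)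
    define v where "v = enum V"
    have sm: "smono v k" and vV: "v ` {..<k} = V" using enum_props[OF finV] cV by (simp_all add: v_def)
    define A where "A i = f -` cell v k i \<inter> space M" for i
    define g where "g x = (\<Sum>i<k. v i * indicator (A i) x)" for x
    have Asets: "A i \<in> sets M" for i unfolding A_def by (rule measurable_sets[OF fm cell_sets])
    have gval: "g x = v i0" if x: "x \<in> space M" and i0: "i0 < k" "f x \<in> cell v k i0" for x i0
    proof -
      have "g x = (\<Sum>i<k. v i * indicator (cell v k i) (f x))"
        unfolding g_def A_def using x by (intro sum.cong) (auto simp: indicator_def)
      also have "\<dots> = v i0" by (rule sum_cell[OF sm i0(2,1)])
      finally show ?thesis .
    qed
    have gprop: "g x \<in> V \<and> \<bar>f x - g x\<bar> = infdist (f x) V" if x: "x \<in> space M" for x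
    proof -
      obtain i0 where i0: "i0 < k" "f x \<in> cell v k i0" using cell_ex[OF sm k0] by blast
      have "g x = v i0" by (rule gval[OF x i0])
      moreover have "infdist (f x) V = \<bar>f x - v i0\<bar>" using infdist_cell[OF sm i0(2,1)] vV by simp
      ultimately show ?thesis using i0 vV by auto
    qed
    have gG: "g \<in> Gpk M k" unfolding Gpk_def
    proof (intro CollectI exI conjI)
      show "k \<le> k" by simp
      show "\<forall>i<k. A i \<in> sets M" using Asets by simp
      show "disjoint_family_on A {..<k}" unfolding disjoint_family_on_def
      proof (intro ballI impI)
        fix i j assume "i \<in> {..<k}" "j \<in> {..<k}" "i \<noteq> j"
        then show "A i \<inter> A j = {}" unfolding A_def using cell_unique[OF sm] by auto
      qed
      show "(\<Union>i<k. A i) = space M"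
      proof
        show "(\<Union>i<k. A i) \<subseteq> space M" unfolding A_def by auto
        show "space M \<subseteq> (\<Union>i<k. A i)"
        proof
          fix x assume x: "x \<in> space M"
          obtain i where "i < k" "f x \<in> cell v k i" using cell_ex[OF sm k0] by blast
          then show "x \<in> (\<Union>i<k. A i)" using x unfolding A_def by blast
        qed
      qed
      show "\<forall>x\<in>space M. g x = (\<Sum>i<k. v i * indicator (A i) x)" by (simp add: g_def)
    qed
    have Dg: "Dc g = Q.CS V"
    proof -
      have "Dc g = (\<integral>x. infdist (f x) V powr p \<partial>M)" unfolding Dc_def
        by (rule Bochner_Integration.integral_cong[OF refl]) (simp add: gprop)
      then show ?thesis using CS_tr by simp
    qed
    have main: "Dc g \<le> Dc h \<and> (Dc h = Dc g \<longrightarrow> (AE x in M. h x = g x))" if hG: "h \<in> Gpk M k" for h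
    proof -
      obtain W where W: "finite W" "W \<noteq> {}" "card W \<le> k" "\<forall>x\<in>space M. h x \<in> W" and hm: "h \<in> borel_measurable M"
        using Gpk_struct[OF hG spne] by blast
      have qW: "Q.quant k W" using W by (simp add: Q.quant_def)
      have hB: "\<bar>h x\<bar> \<le> Max (abs ` W)" if "x \<in> space M" for x using W that by (intro Max_ge) auto
      have inth: "integrable M (\<lambda>x. \<bar>f x - h x\<bar> powr p)" using int_diff[OF fin _ fLp hm hB] p by simp
      obtain w0 where w0: "w0 \<in> W" using W by blast
      have intW: "integrable M (\<lambda>x. infdist (f x) W powr p)"
      proof -
        have "integrable lborel (\<lambda>y. \<Psi> y * infdist y W powr p)"
          using Q.CS_integrable[OF w0] by (simp add: mult.commute)
        then show ?thesis using transfer(2)[OF fm density \<Psi>_meas Pn, of "\<lambda>y. infdist y W powr p"] by simp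
      qed
      have pw: "infdist (f x) W powr p \<le> \<bar>f x - h x\<bar> powr p" if x: "x \<in> space M" for x
      proof -
        have "infdist (f x) W \<le> \<bar>f x - h x\<bar>" using infdist_le[of "h x" W "f x"] W(4) x by (simp add: dist_real_def)
        then show ?thesis using p by (intro powr_mono2) (auto simp: infdist_nonneg)
      qed
      have le1: "Q.CS W \<le> Dc h" unfolding Dc_def CS_tr[symmetric]
        by (rule integral_mono_AE[OF intW inth]) (use pw in \<open>auto intro: AE_I2\<close>)
      have le2: "Q.CS V \<le> Q.CS W" using oV qW by (simp add: Q.opt_def)
      have "Dc g \<le> Dc h" using Dg le1 le2 by simp
      moreover have "AE x in M. h x = g x" if eq: "Dc h = Dc g"
      proof -
        have CSW: "Q.CS W = Q.CS V" using eq Dg le1 le2 by simp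
        have oW: "Q.opt k W" unfolding Q.opt_def using qW CSW oV by (simp add: Q.opt_def)
        have WV: "W = V" by (rule Q.opt_unique[OF oW oV H])
        have "(\<integral>x. \<bar>f x - h x\<bar> powr p - infdist (f x) W powr p \<partial>M) = Dc h - Q.CS W"
          unfolding Dc_def CS_tr[symmetric] by (rule Bochner_Integration.integral_diff[OF inth intW])
        also have "\<dots> = 0" using eq Dg CSW by simp
        finally have "(\<integral>x. \<bar>f x - h x\<bar> powr p - infdist (f x) W powr p \<partial>M) = 0" .
        hence AE1: "AE x in M. \<bar>f x - h x\<bar> powr p - infdist (f x) W powr p = 0"
          using inth intW pw by (subst (asm) integral_nonneg_eq_0_iff_AE) (auto intro: AE_I2)
        define Z where "Z = (\<lambda>(u, w). (u + w) / 2) ` (V \<times> V)"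
        have finZ: "finite Z" unfolding Z_def using finV by simp
        have Zs: "Z \<in> sets borel" using finZ by (simp add: finite_imp_closed borel_closed)
        have "emeasure M (f -` Z \<inter> space M) = (\<integral>\<^sup>+ y. ennreal (\<Psi> y) * indicator Z y \<partial>lborel)"
          by (rule transfer_emeasure[OF fm density \<Psi>_meas Zs])
        also have "\<dots> = (\<integral>\<^sup>+ (y::real). 0 \<partial>lborel)"
        proof (rule nn_integral_cong_AE)
          show "AE y in lborel. ennreal (\<Psi> y) * indicator Z y = 0"
            using AE_not_in[OF finite_imp_null_set_lborel[OF finZ]] by eventually_elim simp
        qed
        finally have "emeasure M (f -` Z \<inter> space M) = 0" by simp
        hence nullZ: "f -` Z \<inter> space M \<in> null_sets M" using measurable_sets[OF fm Zs] by auto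
        have AE2: "AE x in M. f x \<notin> Z" by (rule AE_I'[OF nullZ]) auto
        show ?thesis using AE1 AE2 AE_space
        proof eventually_elim
          case (elim x)
          have x: "x \<in> space M" using elim by simp
          have hV: "h x \<in> V" using W(4) x WV by auto
          have e1: "\<bar>f x - h x\<bar> powr p = infdist (f x) V powr p" using elim WV by simp
          have e2: "\<bar>f x - h x\<bar> = infdist (f x) V"
            using powr_cancel[OF _ _ _ e1] p by (simp add: infdist_nonneg)
          have gx: "g x \<in> V" "\<bar>f x - g x\<bar> = infdist (f x) V" using gprop[OF x] by auto
          show "h x = g x"
          proof (rule ccontr)
            assume ne: "h x \<noteq> g x"
            have "\<bar>f x - h x\<bar> = \<bar>f x - g x\<bar>" using e2 gx by simp
            hence "f x = (h x + g x) / 2" using ne by (auto simp: abs_if split: if_splits)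
            hence "f x \<in> Z" unfolding Z_def using hV gx(1) by force
            then show False using elim by simp
          qed
        qed
      qed
      ultimately show ?thesis by blast
    qed
    show "\<exists>g\<in>Gpk M k. (\<forall>h\<in>Gpk M k. Lp_norm M p (\<lambda>x. f x - g x) \<le> Lp_norm M p (\<lambda>x. f x - h x))
              \<and> (\<forall>h\<in>Gpk M k. Lp_norm M p (\<lambda>x. f x - h x) = Lp_norm M p (\<lambda>x. f x - g x)
                     \<longrightarrow> (AE x in M. h x = g x))"
    proof (intro bexI[OF _ gG] conjI ballI impI)
      fix h assume hG: "h \<in> Gpk M k"
      show "Lp_norm M p (\<lambda>x. f x - g x) \<le> Lp_norm M p (\<lambda>x. f x - h x)"
        unfolding LpD using main[OF hG] Dc0 p by (intro powr_mono2) auto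
    next
      fix h assume hG: "h \<in> Gpk M k" and eq: "Lp_norm M p (\<lambda>x. f x - h x) = Lp_norm M p (\<lambda>x. f x - g x)"
      have "Dc h = Dc g" using powr_cancel[OF Dc0 Dc0 _ eq[unfolded LpD]] p by simp
      then show "AE x in M. h x = g x" using main[OF hG] by blast
    qed
  qed
qed


end
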